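(* Let $A\in\mathbb{R}^{d\times d}$ be orthogonal, $B\in\mathbb{R}^{d\times m}$, and suppose $(A,B)$ is reachable in $k$ steps, i.e. $\operatorname{rank}[B\ AB\ \cdots\ A^{k-1}B]=d$. Let $(w_t)_{t\in\mathbb{N}_0}$ be mutually independent $\mathbb{R}^d$-valued random vectors with $\mathsf{E}[w_t]=0$, $\mathsf{E}[w_tw_t^{\mathrm T}]=Q_t$, and $\mathsf{E}[\|w_t\|^4]\le C_4$ for all $t$, for some $C_4>0$. Consider $x_{t+1}=Ax_t+Bu_t+w_t$ with $x_t\in\mathbb{R}^d$, $u_t\in\mathbb{R}^m$. Then there exist a constant $\rho>0$ and measurable maps $f_0,\ldots,f_{k-1}:\mathbb{R}^d\to\mathbb{R}^m$ with $\|f_i(x)\|\le\rho$ for all $x\in\mathbb{R}^d$ and all $i$, such that the closed-loop system $$x_{t+1}=Ax_t+Bf_{t\bmod k}\bigl(x_{\lfloor t/k\rfloor k}\bigr)+w_t,\qquad x_0=x,$$ satisfies $\sup_{t\in\mathbb{N}_0}\mathsf{E}_x[\|x_t\|^2]<\infty$ for every $x\in\mathbb{R}^d$.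
   Context: $\|\cdot\|$ is the Euclidean norm; $\mathsf{E}_x$ is expectation given $x_0=x$. The policy applies, within each time block $\{\tau k,\ldots,(\tau+1)k-1\}$, the controls $f_0,\ldots,f_{k-1}$ in order, each evaluated at the state $x_{\tau k}$ at the start of the block. *)

theory Defs
  imports "HOL-Analysis.Analysis" "HOL-Probability.Probability"
begin

text \<open>Matrix power A^n (square matrices over real^'d).\<close>
primrec matpow :: "real^'d^'d \<Rightarrow> nat \<Rightarrow> real^'d^'d" where
  "matpow A 0 = mat 1"
| "matpow A (Suc n) = A ** matpow A n"

text \<open>Rank of the block matrix [B, AB, ..., A^(k-1) B]: the dimension of the span
  of all its columns, i.e. of the union of the columns of the blocks A^i B, i < k.\<close>
definition reach_rank :: "real^'d^'d \<Rightarrow> real^'m^'d \<Rightarrow> nat \<Rightarrow> nat" where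
  "reach_rank A B k = dim (\<Union>i<k. columns (matpow A i ** B))"

definition reachable_in :: "real^'d^'d \<Rightarrow> real^'m^'d \<Rightarrow> nat \<Rightarrow> bool" where
  "reachable_in A B k \<longleftrightarrow> reach_rank A B k = CARD('d)"

text \<open>Closed-loop state: x_0 = x, and
  x_(t+1) = A x_t + B f_(t mod k) (x_(floor(t/k) k)) + w_t.\<close>
function (sequential) closed_loop ::
  "real^'d^'d \<Rightarrow> real^'m^'d \<Rightarrow> nat \<Rightarrow> (nat \<Rightarrow> real^'d \<Rightarrow> real^'m)
    \<Rightarrow> (nat \<Rightarrow> 'a \<Rightarrow> real^'d) \<Rightarrow> real^'d \<Rightarrow> nat \<Rightarrow> 'a \<Rightarrow> real^'d" where
  "closed_loop A B k f w x 0 \<omega> = x"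
| "closed_loop A B k f w x (Suc t) \<omega> =
     A *v closed_loop A B k f w x t \<omega>
     + B *v f (t mod k) (closed_loop A B k f w x ((t div k) * k) \<omega>)
     + w t \<omega>"
  by pat_completeness auto
termination
  by (relation "Wellfounded.measure (\<lambda>(A,B,k,f,w,x,t,\<omega>). t)")
     (auto simp: less_Suc_eq_le div_times_less_eq_dividend)

end

theory Submission
  imports Defs
begin

(* ---- part T1 ---- *)

lemma indep_nn:
  assumes P: "prob_space M" and I: "prob_space.indep_var M S X T Y"
    and F[measurable]: "F \<in> borel_measurable (S \<Otimes>\<^sub>M T)"
  shows "(\<integral>\<^sup>+\<omega>. F (X \<omega>, Y \<omega>) \<partial>M) = (\<integral>\<^sup>+\<omega>. \<integral>\<^sup>+\<omega>'. F (X \<omega>, Y \<omega>') \<partial>M \<partial>M)"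
proof -
  interpret prob_space M by fact
  have X[measurable]: "X \<in> measurable M S" and Y[measurable]: "Y \<in> measurable M T"
    and D: "distr M S X \<Otimes>\<^sub>M distr M T Y = distr M (S \<Otimes>\<^sub>M T) (\<lambda>x. (X x, Y x))"
    using I unfolding indep_var_distribution_eq by auto
  interpret T: prob_space "distr M T Y" by (rule prob_space_distr) simp
  have "(\<integral>\<^sup>+\<omega>. F (X \<omega>, Y \<omega>) \<partial>M) = (\<integral>\<^sup>+z. F z \<partial>distr M (S \<Otimes>\<^sub>M T) (\<lambda>x. (X x, Y x)))"
    by (subst nn_integral_distr) auto
  also have "\<dots> = (\<integral>\<^sup>+z. F z \<partial>(distr M S X \<Otimes>\<^sub>M distr M T Y))" by (simp add: D)
  also have "\<dots> = (\<integral>\<^sup>+a. \<integral>\<^sup>+b. F (a, b) \<partial>distr M T Y \<partial>distr M S X)"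
    by (subst T.nn_integral_fst[symmetric]) (auto)
  also have "\<dots> = (\<integral>\<^sup>+\<omega>. \<integral>\<^sup>+b. F (X \<omega>, b) \<partial>distr M T Y \<partial>M)"
    by (subst nn_integral_distr) auto
  also have "\<dots> = (\<integral>\<^sup>+\<omega>. \<integral>\<^sup>+\<omega>'. F (X \<omega>, Y \<omega>') \<partial>M \<partial>M)"
    by (intro nn_integral_cong, subst nn_integral_distr)
       (auto intro!: measurable_Pair2[OF F] measurable_space[OF X])
  finally show ?thesis .
qed


(* ---- part T2 ---- *)

lemma poly_ineq:
  fixes a Mm r :: real
  assumes a: "0 \<le> a" and Mm: "0 \<le> Mm" and r: "Mm + 1 \<le> r"
  shows "a^(Suc g) + (\<Sum>k\<le>g. of_nat (Suc g choose k) * a^k * Mm) + (a + r)^g \<le> (a+r)^(Suc g)"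
proof -
  have r1: "1 \<le> r" using Mm r by linarith
  have e1: "(a+r)^(Suc g) = (\<Sum>k\<le>Suc g. of_nat (Suc g choose k) * a^k * r^(Suc g - k))"
    by (rule binomial_ring)
  have e2: "(a+r)^g = (\<Sum>k\<le>g. of_nat (g choose k) * a^k * r^(g - k))"
    by (rule binomial_ring)
  have "(\<Sum>k\<le>g. of_nat (Suc g choose k) * a^k * Mm) + (a + r)^g
      = (\<Sum>k\<le>g. of_nat (Suc g choose k) * a^k * Mm + of_nat (g choose k) * a^k * r^(g - k))"
    by (simp add: e2 sum.distrib)
  also have "\<dots> \<le> (\<Sum>k\<le>g. of_nat (Suc g choose k) * a^k * r^(Suc g - k))"
  proof (rule sum_mono)
    fix k assume k: "k \<in> {..g}"
    define c where "c = real (Suc g choose k)"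
    have c: "real (g choose k) \<le> c" unfolding c_def
      using binomial_right_mono[of g "Suc g" k] by simp
    have c0: "0 \<le> c" unfolding c_def by simp
    have rj: "1 \<le> r^(g-k)" using r1 by simp
    have "Mm + r^(g-k) \<le> r^(g-k) * r"
    proof -
      have "1 * (r - 1) \<le> r^(g-k) * (r - 1)" using rj r1 by (intro mult_right_mono) auto
      hence "Mm \<le> r^(g-k) * (r - 1)" using r by simp
      thus ?thesis by (simp add: algebra_simps)
    qed
    have "c * Mm + real (g choose k) * r^(g-k) \<le> c * Mm + c * r^(g-k)"
      using c rj by (intro add_left_mono mult_right_mono) auto
    also have "\<dots> = c * (Mm + r^(g-k))" by (simp add: algebra_simps)
    also have "\<dots> \<le> c * (r^(g-k) * r)" using \<open>Mm + r^(g-k) \<le> r^(g-k) * r\<close> c0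
      by (intro mult_left_mono) auto
    finally have "c * Mm + real (g choose k) * r^(g-k) \<le> c * (r^(g-k) * r)" .
    hence "a^k * (c * Mm + real (g choose k) * r^(g-k)) \<le> a^k * (c * (r^(g-k) * r))"
      using a by (intro mult_left_mono) auto
    moreover have "Suc g - k = Suc (g - k)" using k by auto
    ultimately show "of_nat (Suc g choose k) * a^k * Mm + of_nat (g choose k) * a^k * r^(g - k)
        \<le> of_nat (Suc g choose k) * a^k * r^(Suc g - k)"
      by (simp add: c_def algebra_simps)
  qed
  finally have "(\<Sum>k\<le>g. of_nat (Suc g choose k) * a^k * Mm) + (a + r)^g
      \<le> (\<Sum>k\<le>g. of_nat (Suc g choose k) * a^k * r^(Suc g - k))" .
  moreover have "(a+r)^(Suc g) = a^(Suc g) + (\<Sum>k\<le>g. of_nat (Suc g choose k) * a^k * r^(Suc g - k))"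
    unfolding e1 by (simp add: sum.atMost_Suc)
  ultimately show ?thesis by linarith
qed


(* ---- part T3 ---- *)

locale scal =
  fixes M :: "'a measure" and Z D :: "nat \<Rightarrow> 'a \<Rightarrow> real" and r z0 C :: real
  assumes prob: "prob_space M"
    and Zm[measurable]: "\<And>n. Z n \<in> borel_measurable M"
    and Dm[measurable]: "\<And>n. D n \<in> borel_measurable M"
    and Zpos: "\<And>n \<omega>. 0 \<le> Z n \<omega>" and Dpos: "\<And>n \<omega>. 0 \<le> D n \<omega>"
    and Z0: "\<And>\<omega>. Z 0 \<omega> = z0"
    and recZ: "\<And>n \<omega>. Z (Suc n) \<omega> \<le> max (Z n \<omega> - r) 0 + D n \<omega>"
    and mom: "\<And>n. (\<integral>\<^sup>+\<omega>. ennreal (D n \<omega> ^ 4) \<partial>M) \<le> ennreal C"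
    and Cpos: "0 \<le> C" and rC: "C + 2 \<le> r"
    and ind: "\<And>n F. F \<in> borel_measurable (PiM UNIV (\<lambda>_. borel) \<Otimes>\<^sub>M borel) \<Longrightarrow>
        (\<integral>\<^sup>+\<omega>. F (\<lambda>i. Z (min i n) \<omega>, D n \<omega>) \<partial>M)
          = (\<integral>\<^sup>+\<omega>. \<integral>\<^sup>+\<omega>'. F (\<lambda>i. Z (min i n) \<omega>, D n \<omega>') \<partial>M \<partial>M)"
begin

interpretation P: prob_space M by (rule prob)

lemma mom_i: "i \<le> 4 \<Longrightarrow> (\<integral>\<^sup>+\<omega>. ennreal (D n \<omega> ^ i) \<partial>M) \<le> ennreal (1 + C)"
proof -
  assume i: "i \<le> 4"
  have "(\<integral>\<^sup>+\<omega>. ennreal (D n \<omega> ^ i) \<partial>M) \<le> (\<integral>\<^sup>+\<omega>. 1 + ennreal (D n \<omega> ^ 4) \<partial>M)"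
  proof (intro nn_integral_mono)
    fix \<omega>
    have "D n \<omega> ^ i \<le> 1 + D n \<omega> ^ 4"
    proof (cases "D n \<omega> \<le> 1")
      case True
      hence "D n \<omega> ^ i \<le> 1" using Dpos by (simp add: power_le_one)
      thus ?thesis using Dpos[of n \<omega>] by (smt (verit) zero_le_power)
    next
      case False
      hence "D n \<omega> ^ i \<le> D n \<omega> ^ 4" using i by (intro power_increasing) auto
      thus ?thesis by simp
    qed
    thus "ennreal (D n \<omega> ^ i) \<le> 1 + ennreal (D n \<omega> ^ 4)"
      by (metis Dpos ennreal_le_iff ennreal_plus zero_le_one zero_le_power add_nonneg_nonneg ennreal_1)
  qed
  also have "\<dots> = 1 + (\<integral>\<^sup>+\<omega>. ennreal (D n \<omega> ^ 4) \<partial>M)"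
    by (subst nn_integral_add) (auto simp: P.emeasure_space_1)
  also have "\<dots> \<le> 1 + ennreal C" using mom by (intro add_left_mono) auto
  also have "\<dots> = ennreal (1 + C)" using Cpos by (simp add: ennreal_plus)
  finally show ?thesis .
qed

lemma inner:
  assumes z: "r \<le> z" and g: "g \<le> 3"
  shows "(\<integral>\<^sup>+\<omega>'. ennreal ((max (z - r) 0 + D n \<omega>')^(Suc g) + z^g) \<partial>M) \<le> ennreal (z^(Suc g))"
proof -
  define a where "a = z - r"
  have a: "0 \<le> a" using z by (simp add: a_def)
  have r0: "0 \<le> r" using rC Cpos by linarith
  have z0': "0 \<le> z" using z r0 by linarith
  have mx: "max (z - r) 0 = a" using a by (simp add: a_def)
  have exp: "\<And>\<omega>'. (a + D n \<omega>')^(Suc g) + z^g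
     = (a^(Suc g) + z^g) + (\<Sum>k\<le>g. (of_nat (Suc g choose k) * a^k) * D n \<omega>' ^(Suc g - k))"
    by (subst binomial_ring) (simp add: sum.atMost_Suc algebra_simps)
  have "(\<integral>\<^sup>+\<omega>'. ennreal ((max (z - r) 0 + D n \<omega>')^(Suc g) + z^g) \<partial>M)
     = (\<integral>\<^sup>+\<omega>'. ennreal (a^(Suc g) + z^g) +
          (\<Sum>k\<le>g. ennreal (of_nat (Suc g choose k) * a^k) * ennreal (D n \<omega>' ^(Suc g - k))) \<partial>M)"
  proof (intro nn_integral_cong)
    fix \<omega>'
    have t: "\<And>k. 0 \<le> (of_nat (Suc g choose k) * a^k) * D n \<omega>' ^(Suc g - k)"
      using a Dpos by simp
    have "ennreal ((a + D n \<omega>')^(Suc g) + z^g) = ennreal (a^(Suc g) + z^g) +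
        ennreal (\<Sum>k\<le>g. (of_nat (Suc g choose k) * a^k) * D n \<omega>' ^(Suc g - k))"
      unfolding exp using a z0' t by (intro ennreal_plus) (auto intro: sum_nonneg)
    also have "ennreal (\<Sum>k\<le>g. (of_nat (Suc g choose k) * a^k) * D n \<omega>' ^(Suc g - k))
      = (\<Sum>k\<le>g. ennreal ((of_nat (Suc g choose k) * a^k) * D n \<omega>' ^(Suc g - k)))"
      using t by (subst sum_ennreal) auto
    also have "\<dots> = (\<Sum>k\<le>g. ennreal (of_nat (Suc g choose k) * a^k) * ennreal (D n \<omega>' ^(Suc g - k)))"
      using a Dpos by (intro sum.cong refl, subst ennreal_mult) auto
    finally show "ennreal ((max (z - r) 0 + D n \<omega>')^(Suc g) + z^g) = ennreal (a^(Suc g) + z^g) +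
          (\<Sum>k\<le>g. ennreal (of_nat (Suc g choose k) * a^k) * ennreal (D n \<omega>' ^(Suc g - k)))"
      unfolding mx .
  qed
  also have "\<dots> = ennreal (a^(Suc g) + z^g) +
      (\<Sum>k\<le>g. ennreal (of_nat (Suc g choose k) * a^k) * (\<integral>\<^sup>+\<omega>'. ennreal (D n \<omega>' ^(Suc g - k)) \<partial>M))"
    by (subst nn_integral_add) (auto simp: nn_integral_sum nn_integral_cmult P.emeasure_space_1)
  also have "\<dots> \<le> ennreal (a^(Suc g) + z^g) +
      (\<Sum>k\<le>g. ennreal (of_nat (Suc g choose k) * a^k) * ennreal (1 + C))"
    using g by (intro add_left_mono sum_mono mult_left_mono mom_i) auto
  also have "\<dots> = ennreal (a^(Suc g) + (\<Sum>k\<le>g. of_nat (Suc g choose k) * a^k * (1 + C)) + z^g)"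
  proof -
    have t: "\<And>k. 0 \<le> of_nat (Suc g choose k) * a^k * (1 + C)" using a Cpos by simp
    have "(\<Sum>k\<le>g. ennreal (of_nat (Suc g choose k) * a^k) * ennreal (1 + C))
       = (\<Sum>k\<le>g. ennreal (of_nat (Suc g choose k) * a^k * (1 + C)))"
      using a Cpos by (intro sum.cong refl, subst ennreal_mult) auto
    also have "\<dots> = ennreal (\<Sum>k\<le>g. of_nat (Suc g choose k) * a^k * (1 + C))"
      using t by (subst sum_ennreal) auto
    finally have e: "(\<Sum>k\<le>g. ennreal (of_nat (Suc g choose k) * a^k) * ennreal (1 + C))
       = ennreal (\<Sum>k\<le>g. of_nat (Suc g choose k) * a^k * (1 + C))" .
    have s0: "0 \<le> (\<Sum>k\<le>g. of_nat (Suc g choose k) * a^k * (1 + C))" using t by (intro sum_nonneg) auto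
    have "ennreal (a^(Suc g) + z^g) + ennreal (\<Sum>k\<le>g. of_nat (Suc g choose k) * a^k * (1 + C))
       = ennreal (a^(Suc g) + z^g + (\<Sum>k\<le>g. of_nat (Suc g choose k) * a^k * (1 + C)))"
      using s0 a z0' by (intro ennreal_plus[symmetric]) auto
    thus ?thesis unfolding e by (simp add: ac_simps)
  qed
  also have "\<dots> \<le> ennreal (z^(Suc g))"
    using poly_ineq[OF a, of "1 + C" r g] Cpos rC by (intro ennreal_leI) (simp add: a_def)
  finally show ?thesis .
qed

lemma histm[measurable]: "(\<lambda>\<omega> i. Z (min i n) \<omega>) \<in> measurable M (PiM UNIV (\<lambda>_. borel))"
  by (rule measurable_PiM_single') auto

lemma drift:
  fixes h :: "(nat \<Rightarrow> real) \<Rightarrow> ennreal"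
  assumes hm[measurable]: "h \<in> borel_measurable (PiM UNIV (\<lambda>_. borel))"
    and hr: "\<And>\<eta>. h \<eta> \<noteq> 0 \<Longrightarrow> r \<le> \<eta> n" and g: "g \<le> 3"
  shows "(\<integral>\<^sup>+\<omega>. h (\<lambda>i. Z (min i n) \<omega>) * ennreal (Z (Suc n) \<omega> ^ Suc g) \<partial>M)
       + (\<integral>\<^sup>+\<omega>. h (\<lambda>i. Z (min i n) \<omega>) * ennreal (Z n \<omega> ^ g) \<partial>M)
     \<le> (\<integral>\<^sup>+\<omega>. h (\<lambda>i. Z (min i n) \<omega>) * ennreal (Z n \<omega> ^ Suc g) \<partial>M)"
proof -
  define F where "F = (\<lambda>(\<eta>::nat\<Rightarrow>real, d::real). h \<eta> * ennreal ((max (\<eta> n - r) 0 + d)^(Suc g) + (\<eta> n)^g))"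
  have Fm: "F \<in> borel_measurable (PiM UNIV (\<lambda>_. borel) \<Otimes>\<^sub>M borel)"
    unfolding F_def by measurable
  have "(\<integral>\<^sup>+\<omega>. h (\<lambda>i. Z (min i n) \<omega>) * ennreal (Z (Suc n) \<omega> ^ Suc g) \<partial>M)
     \<le> (\<integral>\<^sup>+\<omega>. h (\<lambda>i. Z (min i n) \<omega>) * ennreal ((max (Z n \<omega> - r) 0 + D n \<omega>) ^ Suc g) \<partial>M)"
    by (intro nn_integral_mono mult_left_mono ennreal_leI power_mono recZ Zpos) auto
  hence "(\<integral>\<^sup>+\<omega>. h (\<lambda>i. Z (min i n) \<omega>) * ennreal (Z (Suc n) \<omega> ^ Suc g) \<partial>M)
       + (\<integral>\<^sup>+\<omega>. h (\<lambda>i. Z (min i n) \<omega>) * ennreal (Z n \<omega> ^ g) \<partial>M)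
     \<le> (\<integral>\<^sup>+\<omega>. h (\<lambda>i. Z (min i n) \<omega>) * ennreal ((max (Z n \<omega> - r) 0 + D n \<omega>) ^ Suc g) \<partial>M)
       + (\<integral>\<^sup>+\<omega>. h (\<lambda>i. Z (min i n) \<omega>) * ennreal (Z n \<omega> ^ g) \<partial>M)"
    by (rule add_right_mono)
  also have "\<dots> = (\<integral>\<^sup>+\<omega>. F (\<lambda>i. Z (min i n) \<omega>, D n \<omega>) \<partial>M)"
  proof -
    have "\<dots> = (\<integral>\<^sup>+\<omega>. h (\<lambda>i. Z (min i n) \<omega>) * ennreal ((max (Z n \<omega> - r) 0 + D n \<omega>) ^ Suc g)
         + h (\<lambda>i. Z (min i n) \<omega>) * ennreal (Z n \<omega> ^ g) \<partial>M)"
      by (rule nn_integral_add[symmetric]) auto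
    also have "\<dots> = (\<integral>\<^sup>+\<omega>. F (\<lambda>i. Z (min i n) \<omega>, D n \<omega>) \<partial>M)"
      unfolding F_def using Zpos Dpos
      by (intro nn_integral_cong) (simp add: ennreal_plus distrib_left)
    finally show ?thesis .
  qed
  also have "\<dots> = (\<integral>\<^sup>+\<omega>. \<integral>\<^sup>+\<omega>'. F (\<lambda>i. Z (min i n) \<omega>, D n \<omega>') \<partial>M \<partial>M)"
    by (rule ind[OF Fm])
  also have "\<dots> = (\<integral>\<^sup>+\<omega>. h (\<lambda>i. Z (min i n) \<omega>) *
       (\<integral>\<^sup>+\<omega>'. ennreal ((max (Z n \<omega> - r) 0 + D n \<omega>')^(Suc g) + (Z n \<omega>)^g) \<partial>M) \<partial>M)"
    unfolding F_def by (intro nn_integral_cong, subst nn_integral_cmult[symmetric]) auto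
  also have "\<dots> \<le> (\<integral>\<^sup>+\<omega>. h (\<lambda>i. Z (min i n) \<omega>) * ennreal (Z n \<omega> ^ Suc g) \<partial>M)"
  proof (intro nn_integral_mono)
    fix \<omega>
    show "h (\<lambda>i. Z (min i n) \<omega>) *
       (\<integral>\<^sup>+\<omega>'. ennreal ((max (Z n \<omega> - r) 0 + D n \<omega>')^(Suc g) + (Z n \<omega>)^g) \<partial>M)
      \<le> h (\<lambda>i. Z (min i n) \<omega>) * ennreal (Z n \<omega> ^ Suc g)"
    proof (cases "h (\<lambda>i. Z (min i n) \<omega>) = 0")
      case False
      hence "r \<le> Z n \<omega>" using hr by fastforce
      thus ?thesis by (intro mult_left_mono inner g) auto
    qed simp
  qed
  finally show ?thesis .
qed

end

(* ---- part T4 ---- *)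

lemma chain:
  fixes x y u v :: "nat \<Rightarrow> ennreal"
  assumes xy: "\<And>L. x (Suc L) + y L \<le> x L" and uv: "\<And>L. u (Suc L) \<le> u L + v L"
  shows "u N * x N + (\<Sum>L<N. u (Suc L) * y L) \<le> u 0 * x 0 + (\<Sum>L<N. v L * x L)"
proof (induction N)
  case 0 thus ?case by simp
next
  case (Suc N)
  have "u (Suc N) * x (Suc N) + (\<Sum>L<Suc N. u (Suc L) * y L)
      = u (Suc N) * (x (Suc N) + y N) + (\<Sum>L<N. u (Suc L) * y L)"
    by (simp add: distrib_left ac_simps)
  also have "\<dots> \<le> u (Suc N) * x N + (\<Sum>L<N. u (Suc L) * y L)"
    using xy by (intro add_right_mono mult_left_mono) auto
  also have "\<dots> \<le> (u N + v N) * x N + (\<Sum>L<N. u (Suc L) * y L)"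
    using uv by (intro add_right_mono mult_right_mono) auto
  also have "\<dots> = (u N * x N + (\<Sum>L<N. u (Suc L) * y L)) + v N * x N"
    by (simp only: distrib_right add.assoc add.commute add.left_commute)
  also have "\<dots> \<le> (u 0 * x 0 + (\<Sum>L<N. v L * x L)) + v N * x N"
    using Suc by (intro add_right_mono)
  also have "\<dots> = u 0 * x 0 + (\<Sum>L<Suc N. v L * x L)" by (simp add: ac_simps)
  finally show ?case .
qed

lemma pow4_le: fixes a b :: real assumes "0 \<le> a" "0 \<le> b" shows "(a+b)^4 \<le> 8*(a^4+b^4)"
proof -
  have 1: "(a+b)^2 \<le> 2*(a^2+b^2)" using sum_squares_ge_zero[of "a-b" 0]
    by (simp add: power2_eq_square algebra_simps)
  have "(a+b)^4 = ((a+b)^2)^2" by simp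
  also have "\<dots> \<le> (2*(a^2+b^2))^2" using 1 by (intro power_mono) auto
  also have "\<dots> \<le> 8*(a^4+b^4)"
  proof -
    have "0 \<le> (a^2-b^2)^2" by simp
    moreover have "(a^2-b^2)^2 = a^4 - 2*(a^2*b^2) + b^4" by (simp add: power2_eq_square power4_eq_xxxx algebra_simps)
    moreover have "(2*(a^2+b^2))^2 = 4*a^4 + 8*(a^2*b^2) + 4*b^4" by (simp add: power2_eq_square power4_eq_xxxx algebra_simps)
    moreover have "8*(a^4+b^4) = 8*a^4 + 8*b^4" by simp
    ultimately show ?thesis by linarith
  qed
  finally show ?thesis .
qed

context scal begin

interpretation P: prob_space M by (rule prob)

definition alv :: "nat \<Rightarrow> real \<Rightarrow> nat \<Rightarrow> 'a \<Rightarrow> bool" where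
  "alv j S L \<omega> \<longleftrightarrow> Z j \<omega> \<le> S \<and> (\<forall>l. j < l \<and> l \<le> j + L \<longrightarrow> r < Z l \<omega>)"

definition bb :: "nat \<Rightarrow> real \<Rightarrow> nat \<Rightarrow> nat \<Rightarrow> ennreal" where
  "bb j S g L = (\<integral>\<^sup>+\<omega>. (if alv j S (Suc L) \<omega> then ennreal (Z (j + Suc L) \<omega> ^ g) else 0) \<partial>M)"

lemma bb_drift: assumes "g \<le> 3"
  shows "bb j S (Suc g) (Suc L) + bb j S g L \<le> bb j S (Suc g) L"
proof -
  define h where "h = (\<lambda>\<eta>::nat\<Rightarrow>real. if \<eta> j \<le> S \<and> (\<forall>l\<in>{j<..j + Suc L}. r < \<eta> l) then (1::ennreal) else 0)"
  have hm: "h \<in> borel_measurable (PiM UNIV (\<lambda>_. borel))" unfolding h_def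
  proof (rule measurable_If[OF measurable_const measurable_const])
    have 1: "Measurable.pred (PiM UNIV (\<lambda>_. borel)) (\<lambda>\<eta>::nat\<Rightarrow>real. \<eta> j \<le> S)" by measurable
    have 2: "Measurable.pred (PiM UNIV (\<lambda>_. borel)) (\<lambda>\<eta>::nat\<Rightarrow>real. \<forall>l\<in>{j<..j + Suc L}. r < \<eta> l)"
      by (rule pred_intros_finite(3)) (simp, measurable)
    have "Measurable.pred (PiM UNIV (\<lambda>_. borel)) (\<lambda>\<eta>::nat\<Rightarrow>real. \<eta> j \<le> S \<and> (\<forall>l\<in>{j<..j + Suc L}. r < \<eta> l))"
      using 1 2 by (rule pred_intros_logic(3))
    thus "{\<eta> \<in> space (PiM UNIV (\<lambda>_. borel)). \<eta> j \<le> S \<and> (\<forall>l\<in>{j<..j + Suc L}. r < \<eta> l)} \<in> sets (PiM UNIV (\<lambda>_. borel))"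
      by (rule predE)
  qed auto
  have hr: "\<And>\<eta>. h \<eta> \<noteq> 0 \<Longrightarrow> r \<le> \<eta> (j + Suc L)"
  proof -
    fix \<eta> assume "h \<eta> \<noteq> 0"
    hence "\<forall>l\<in>{j<..j + Suc L}. r < \<eta> l" unfolding h_def by (auto split: if_splits)
    moreover have "j + Suc L \<in> {j<..j + Suc L}" by simp
    ultimately show "r \<le> \<eta> (j + Suc L)" by fastforce
  qed
  have hh: "\<And>\<omega>. h (\<lambda>i. Z (min i (Suc (j + L))) \<omega>) = (if alv j S (Suc L) \<omega> then 1 else 0)"
    unfolding h_def alv_def by (auto simp: min_def)
  note d = drift[OF hm hr assms]
  have e1: "(\<integral>\<^sup>+\<omega>. h (\<lambda>i. Z (min i (j + Suc L)) \<omega>) * ennreal (Z (j + Suc L) \<omega> ^ Suc g) \<partial>M) = bb j S (Suc g) L"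
    unfolding bb_def by (intro nn_integral_cong) (simp add: hh)
  have e2: "(\<integral>\<^sup>+\<omega>. h (\<lambda>i. Z (min i (j + Suc L)) \<omega>) * ennreal (Z (j + Suc L) \<omega> ^ g) \<partial>M) = bb j S g L"
    unfolding bb_def by (intro nn_integral_cong) (simp add: hh)
  have e3: "bb j S (Suc g) (Suc L) \<le> (\<integral>\<^sup>+\<omega>. h (\<lambda>i. Z (min i (j + Suc L)) \<omega>) * ennreal (Z (Suc (j + Suc L)) \<omega> ^ Suc g) \<partial>M)"
    unfolding bb_def by (intro nn_integral_mono) (auto simp: hh alv_def)
  have "bb j S (Suc g) (Suc L) + bb j S g L \<le>
      (\<integral>\<^sup>+\<omega>. h (\<lambda>i. Z (min i (j + Suc L)) \<omega>) * ennreal (Z (Suc (j + Suc L)) \<omega> ^ Suc g) \<partial>M)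
     + (\<integral>\<^sup>+\<omega>. h (\<lambda>i. Z (min i (j + Suc L)) \<omega>) * ennreal (Z (j + Suc L) \<omega> ^ g) \<partial>M)"
    unfolding e2 using e3 by (rule add_right_mono)
  also note d
  finally show ?thesis unfolding e1 .
qed

lemma bb_start: assumes g: "g \<le> 4" and S: "0 \<le> S"
  shows "bb j S g 0 \<le> ennreal (8*((1+S)^4 + C))"
proof -
  have r0: "0 \<le> r" using rC Cpos by linarith
  have "bb j S g 0 \<le> (\<integral>\<^sup>+\<omega>. ennreal (8*(1+S)^4) + ennreal (8 * D j \<omega> ^ 4) \<partial>M)"
    unfolding bb_def
  proof (intro nn_integral_mono)
    fix \<omega>
    show "(if alv j S (Suc 0) \<omega> then ennreal (Z (j + Suc 0) \<omega> ^ g) else 0)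
        \<le> ennreal (8*(1+S)^4) + ennreal (8 * D j \<omega> ^ 4)"
    proof (cases "alv j S (Suc 0) \<omega>")
      case True
      hence zj: "Z j \<omega> \<le> S" by (simp add: alv_def)
      have "Z (Suc j) \<omega> \<le> S + D j \<omega>" using recZ[of j \<omega>] zj r0 Zpos[of j \<omega>] by linarith
      hence "Z (Suc j) \<omega> \<le> (1 + S) + D j \<omega>" by linarith
      hence "Z (Suc j) \<omega> ^ g \<le> ((1 + S) + D j \<omega>) ^ g" using Zpos by (intro power_mono) auto
      also have "\<dots> \<le> ((1 + S) + D j \<omega>) ^ 4" using S Dpos[of j \<omega>] g by (intro power_increasing) auto
      also have "\<dots> \<le> 8*((1+S)^4 + D j \<omega> ^ 4)" using S Dpos[of j \<omega>] by (intro pow4_le) auto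
      finally have "Z (Suc j) \<omega> ^ g \<le> 8*(1+S)^4 + 8 * D j \<omega> ^ 4" by simp
      thus ?thesis using True S Dpos[of j \<omega>]
        by (simp add: ennreal_plus[symmetric] ennreal_leI del: ennreal_plus)
    qed simp
  qed
  also have "\<dots> = ennreal (8*(1+S)^4) + ennreal 8 * (\<integral>\<^sup>+\<omega>. ennreal (D j \<omega> ^ 4) \<partial>M)"
    using Dpos by (subst nn_integral_add) (auto simp: P.emeasure_space_1 ennreal_mult nn_integral_cmult)
  also have "\<dots> \<le> ennreal (8*(1+S)^4) + ennreal 8 * ennreal C"
    using mom by (intro add_left_mono mult_left_mono) auto
  also have "\<dots> = ennreal (8*((1+S)^4 + C))"
  proof -
    have "ennreal 8 * ennreal C = ennreal (8*C)" using Cpos by (simp add: ennreal_mult)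
    moreover have "ennreal (8*(1+S)^4) + ennreal (8*C) = ennreal (8*(1+S)^4 + 8*C)"
      using S Cpos by (intro ennreal_plus[symmetric]) auto
    ultimately show ?thesis by (simp add: algebra_simps)
  qed
  finally show ?thesis .
qed

end

(* ---- part T6 ---- *)

context scal begin

interpretation P: prob_space M by (rule prob)

definition TT :: "nat \<Rightarrow> real \<Rightarrow> nat \<Rightarrow> nat \<Rightarrow> nat \<Rightarrow> ennreal" where
  "TT j S \<beta> g N = (\<Sum>L<N. of_nat ((L+1)^\<beta>) * bb j S g L)"

lemma chain_inst:
  assumes g: "g \<le> 3" and w: "\<And>L::nat. (L+2)^\<beta> \<le> (L+1)^\<beta> + c*(L+1)^(\<beta> - 1)"
  shows "TT j S \<beta> g N \<le> bb j S (Suc g) 0 + of_nat c * TT j S (\<beta> - 1) (Suc g) N"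
proof -
  let ?u = "\<lambda>L. (of_nat ((L+1)^\<beta>) :: ennreal)"
  let ?v = "\<lambda>L. (of_nat (c*(L+1)^(\<beta> - 1)) :: ennreal)"
  have uv: "\<And>L. ?u (Suc L) \<le> ?u L + ?v L"
  proof -
    fix L :: nat
    have "(Suc L + 1)^\<beta> \<le> (L+1)^\<beta> + c*(L+1)^(\<beta> - 1)" using w[of L] by simp
    hence "(of_nat ((Suc L + 1)^\<beta>) :: ennreal) \<le> of_nat ((L+1)^\<beta> + c*(L+1)^(\<beta> - 1))"
      by (rule of_nat_mono)
    thus "?u (Suc L) \<le> ?u L + ?v L" by simp
  qed
  have xy: "\<And>L. bb j S (Suc g) (Suc L) + bb j S g L \<le> bb j S (Suc g) L" by (rule bb_drift[OF g])
  have c1: "?u N * bb j S (Suc g) N + (\<Sum>L<N. ?u (Suc L) * bb j S g L)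
      \<le> ?u 0 * bb j S (Suc g) 0 + (\<Sum>L<N. ?v L * bb j S (Suc g) L)"
    by (rule chain[where x="bb j S (Suc g)" and y="bb j S g" and u="?u" and v="?v", OF xy uv])
  have "TT j S \<beta> g N \<le> (\<Sum>L<N. ?u (Suc L) * bb j S g L)" unfolding TT_def
    by (intro sum_mono mult_right_mono of_nat_mono power_mono) auto
  also have "\<dots> \<le> ?u N * bb j S (Suc g) N + (\<Sum>L<N. ?u (Suc L) * bb j S g L)" by simp
  also note c1
  also have "?u 0 * bb j S (Suc g) 0 + (\<Sum>L<N. ?v L * bb j S (Suc g) L)
      = bb j S (Suc g) 0 + of_nat c * TT j S (\<beta> - 1) (Suc g) N"
    unfolding TT_def by (simp add: sum_distrib_left mult.assoc)
  finally show ?thesis .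
qed

lemma bb4_le: "bb j S 4 L \<le> bb j S 4 0"
proof (induction L)
  case (Suc L)
  have "bb j S (Suc 3) (Suc L) + bb j S 3 L \<le> bb j S (Suc 3) L" by (rule bb_drift) simp
  hence h: "bb j S 4 (Suc L) + bb j S 3 L \<le> bb j S 4 L" by (simp add: eval_nat_numeral)
  have "bb j S 4 (Suc L) \<le> bb j S 4 (Suc L) + bb j S 3 L" by (rule add_increasing2) auto
  hence "bb j S 4 (Suc L) \<le> bb j S 4 L" using h by (rule order_trans)
  thus ?case using Suc by simp
qed simp

lemma bb0_mono: "bb j S 0 (Suc L) \<le> bb j S 0 L"
  unfolding bb_def by (intro nn_integral_mono) (auto simp: alv_def)

lemma sum_cubes: "4 * (\<Sum>l<n. ((l::nat)+1)^3) = n^2 * (n+1)^2"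
proof (induction n)
  case (Suc n)
  have "4 * (\<Sum>l<Suc n. (l+1)^3) = 4 * (\<Sum>l<n. (l+1)^3) + 4 * (n+1)^3" by simp
  also have "\<dots> = n^2 * (n+1)^2 + 4 * (n+1)^3" using Suc by simp
  also have "\<dots> = (Suc n)^2 * (Suc n + 1)^2" by (simp add: power2_eq_square power3_eq_cube algebra_simps)
  finally show ?case .
qed simp

end

(* ---- part T7 ---- *)

context scal begin

interpretation P: prob_space M by (rule prob)

lemma alv_meas[measurable]: "Measurable.pred M (alv j S L)"
  unfolding alv_def by measurable

lemma ennr_lin: "(x::ennreal) + of_nat a * x = of_nat (Suc a) * x"
  by (simp add: distrib_right)

lemma TT_bound: assumes S: "0 \<le> S"
  shows "TT j S 3 0 N \<le> 50 * ennreal (8*((1+S)^4 + C))"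
proof -
  define B where "B = ennreal (8*((1+S)^4 + C))"
  have bs: "\<And>g. g \<le> 4 \<Longrightarrow> bb j S g 0 \<le> B" unfolding B_def using S bb_start by blast
  have t03: "TT j S 0 3 N \<le> B"
  proof -
    have "TT j S 0 3 N \<le> bb j S (Suc 3) 0 + of_nat 0 * TT j S (0 - 1) (Suc 3) N"
      by (rule chain_inst) auto
    thus ?thesis using bs[of 4] by (simp add: eval_nat_numeral)
  qed
  have t12: "TT j S 1 2 N \<le> 2 * B"
  proof -
    have "TT j S 1 2 N \<le> bb j S (Suc 2) 0 + of_nat 1 * TT j S (1 - 1) (Suc 2) N"
      by (rule chain_inst) auto
    also have "\<dots> \<le> B + B" using bs[of 3] t03 by (intro add_mono) (auto simp: eval_nat_numeral)
    finally show ?thesis by (simp add: mult_2)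
  qed
  have t21: "TT j S 2 1 N \<le> 7 * B"
  proof -
    have "TT j S 2 1 N \<le> bb j S (Suc 1) 0 + of_nat 3 * TT j S (2 - 1) (Suc 1) N"
      by (rule chain_inst) (auto simp: power2_eq_square algebra_simps)
    also have "\<dots> \<le> B + of_nat 3 * (2 * B)" using bs[of 2] t12
      by (intro add_mono mult_left_mono) (auto simp: eval_nat_numeral)
    also have "\<dots> = 7 * B"
    proof -
      have "of_nat 3 * (2 * B) = of_nat 6 * B" by (simp add: mult.assoc[symmetric])
      thus ?thesis using ennr_lin[of B 6] by (simp add: eval_nat_numeral)
    qed
    finally show ?thesis .
  qed
  have "TT j S 3 0 N \<le> bb j S (Suc 0) 0 + of_nat 7 * TT j S (3 - 1) (Suc 0) N"
    by (rule chain_inst) (auto simp: power2_eq_square power3_eq_cube algebra_simps)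
  also have "\<dots> \<le> B + of_nat 7 * (7 * B)" using bs[of 1] t21
    by (intro add_mono mult_left_mono) (auto simp: eval_nat_numeral)
  also have "\<dots> = 50 * B"
  proof -
    have "of_nat 7 * (7 * B) = of_nat 49 * B" by (simp add: mult.assoc[symmetric])
    thus ?thesis using ennr_lin[of B 49] by (simp add: eval_nat_numeral)
  qed
  finally show ?thesis unfolding B_def .
qed

lemma bb0_bound: assumes S: "0 \<le> S"
  shows "of_nat ((L+1)^4) * bb j S 0 L \<le> 200 * ennreal (8*((1+S)^4 + C))"
proof -
  have dm: "decseq (bb j S 0)" by (rule decseq_SucI) (rule bb0_mono)
  have 1: "(\<Sum>l<Suc L. of_nat ((l+1)^3)) * bb j S 0 L \<le> TT j S 3 0 (Suc L)"
    unfolding TT_def sum_distrib_right by (intro sum_mono mult_left_mono decseqD[OF dm]) auto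
  have "(L+1)^4 \<le> 4 * (\<Sum>l<Suc L. ((l::nat)+1)^3)"
  proof -
    have "(Suc L)^2 * (Suc L)^2 = (Suc L)^(2+2)" by (rule power_add[symmetric])
    hence "(L+1)^4 = (Suc L)^2 * (Suc L)^2" by simp
    also have "\<dots> \<le> (Suc L)^2 * (Suc L + 1)^2" by (intro mult_left_mono power_mono) auto
    also have "\<dots> = 4 * (\<Sum>l<Suc L. ((l::nat)+1)^3)" using sum_cubes[of "Suc L"] by simp
    finally show ?thesis .
  qed
  hence "(of_nat ((L+1)^4) :: ennreal) \<le> of_nat (4 * (\<Sum>l<Suc L. ((l::nat)+1)^3))"
    by (rule of_nat_mono)
  hence 2: "(of_nat ((L+1)^4) :: ennreal) \<le> 4 * (\<Sum>l<Suc L. of_nat ((l+1)^3))"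
    by (simp add: of_nat_sum)
  have "of_nat ((L+1)^4) * bb j S 0 L \<le> (4 * (\<Sum>l<Suc L. of_nat ((l+1)^3))) * bb j S 0 L"
    using 2 by (rule mult_right_mono) simp
  also have "\<dots> = 4 * ((\<Sum>l<Suc L. of_nat ((l+1)^3)) * bb j S 0 L)" by (rule mult.assoc)
  also have "\<dots> \<le> 4 * TT j S 3 0 (Suc L)" using 1 by (rule mult_left_mono) simp
  also have "\<dots> \<le> 4 * (50 * ennreal (8*((1+S)^4 + C)))" using TT_bound[OF S] by (rule mult_left_mono) simp
  also have "\<dots> = 200 * ennreal (8*((1+S)^4 + C))" by (simp add: mult.assoc[symmetric])
  finally show ?thesis .
qed

lemma bb2_bound: assumes S: "0 \<le> S"
  shows "of_nat ((L+1)^2) * bb j S 2 L \<le> 201 * ennreal (8*((1+S)^4 + C))"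
proof -
  define B where "B = ennreal (8*((1+S)^4 + C))"
  define m :: nat where "m = (L+1)^2"
  have "of_nat m * bb j S 2 L
     = (\<integral>\<^sup>+\<omega>. of_nat m * (if alv j S (Suc L) \<omega> then ennreal (Z (j + Suc L) \<omega> ^ 2) else 0) \<partial>M)"
    unfolding bb_def by (rule nn_integral_cmult[symmetric]) measurable
  also have "\<dots> \<le> (\<integral>\<^sup>+\<omega>. (if alv j S (Suc L) \<omega> then ennreal (Z (j + Suc L) \<omega> ^ 4) else 0)
       + of_nat (m^2) * (if alv j S (Suc L) \<omega> then ennreal (Z (j + Suc L) \<omega> ^ 0) else 0) \<partial>M)"
  proof (intro nn_integral_mono)
    fix \<omega>
    define z where "z = Z (j + Suc L) \<omega>"
    have "real m * z^2 \<le> z^4 + (real m)^2"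
    proof -
      have "0 \<le> (z^2 - real m)^2" by simp
      moreover have "(z^2 - real m)^2 = z^4 - 2*(real m * z^2) + (real m)^2"
        by (simp add: power2_eq_square power4_eq_xxxx algebra_simps)
      moreover have "0 \<le> real m * z^2" by simp
      ultimately show ?thesis by linarith
    qed
    hence "ennreal (real m * z^2) \<le> ennreal (z^4 + (real m)^2)" by (rule ennreal_leI)
    moreover have "of_nat (m^2) = ennreal ((real m)^2)"
      by (metis ennreal_of_nat_eq_real_of_nat of_nat_power)
    moreover have "of_nat m = ennreal (real m)" by (rule ennreal_of_nat_eq_real_of_nat)
    ultimately have "of_nat m * ennreal (z^2) \<le> ennreal (z^4) + of_nat (m^2)"
      by (simp add: ennreal_mult ennreal_plus del: of_nat_power)
    thus "of_nat m * (if alv j S (Suc L) \<omega> then ennreal (Z (j + Suc L) \<omega> ^ 2) else 0)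
       \<le> (if alv j S (Suc L) \<omega> then ennreal (Z (j + Suc L) \<omega> ^ 4) else 0)
       + of_nat (m^2) * (if alv j S (Suc L) \<omega> then ennreal (Z (j + Suc L) \<omega> ^ 0) else 0)"
      unfolding z_def by auto
  qed
  also have "\<dots> = bb j S 4 L + of_nat (m^2) * bb j S 0 L"
    unfolding bb_def by (subst nn_integral_add) (auto simp: nn_integral_cmult)
  also have "\<dots> \<le> B + 200 * B"
  proof (intro add_mono)
    show "bb j S 4 L \<le> B" using bb4_le[of j S L] bb_start[of 4 S j] S unfolding B_def by simp
    have "m^2 = (L+1)^4" unfolding m_def by (simp add: power_mult[symmetric])
    thus "of_nat (m^2) * bb j S 0 L \<le> 200 * B" using bb0_bound[OF S, of L j] unfolding B_def by simp
  qed
  also have "\<dots> = 201 * B" using ennr_lin[of B 200] by (simp add: eval_nat_numeral)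
  finally show ?thesis unfolding m_def B_def by simp
qed

end

(* ---- part T8 ---- *)

lemma inv_sq_sum: "(\<Sum>L<n. 1 / (real L + 1)^2) \<le> 2 - 2 / (real n + 1)"
proof (induction n)
  case (Suc n)
  have "(\<Sum>L<Suc n. 1 / (real L + 1)^2) = (\<Sum>L<n. 1 / (real L + 1)^2) + 1 / (real n + 1)^2" by simp
  also have "\<dots> \<le> 2 - 2 / (real n + 1) + 1 / (real n + 1)^2" using Suc by simp
  also have "\<dots> \<le> 2 - 2 / (real (Suc n) + 1)"
  proof -
    have nn: "0 \<le> real n * real n" by simp
    have "1 / (real n + 1)^2 \<le> 2 / (real n + 1) - 2 / (real n + 2)"
      using nn by (simp add: divide_simps power2_eq_square)
    moreover have "2 / (real (Suc n) + 1) = 2 / (real n + 2)" by (simp add: add.commute)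
    ultimately show ?thesis by linarith
  qed
  finally show ?case .
qed simp

lemma ennr_div: fixes b K :: ennreal assumes "of_nat ((L+1)^2) * b \<le> K"
  shows "b \<le> K * ennreal (1 / (real L + 1)^2)"
proof -
  have r: "real ((L+1)^2) = (real L + 1)^2" by simp
  have m: "ennreal (1 / (real L + 1)^2) * of_nat ((L+1)^2) = 1"
    unfolding ennreal_of_nat_eq_real_of_nat r
    by (subst ennreal_mult[symmetric]) (auto simp del: of_nat_power)
  have "ennreal (1 / (real L + 1)^2) * (of_nat ((L+1)^2) * b)
      = (ennreal (1 / (real L + 1)^2) * of_nat ((L+1)^2)) * b" by (rule mult.assoc[symmetric])
  hence "b = ennreal (1 / (real L + 1)^2) * (of_nat ((L+1)^2) * b)" unfolding m by simp
  also have "\<dots> \<le> ennreal (1 / (real L + 1)^2) * K" using assms by (rule mult_left_mono) simp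
  finally show ?thesis by (simp add: mult.commute)
qed

context scal begin

interpretation P: prob_space M by (rule prob)


lemma exc: "\<exists>j<Suc m. alv j (max r z0) (Suc m - j) \<omega>" if "r < Z (Suc m) \<omega>"
  using that
proof (induction m)
  case 0
  have "alv 0 (max r z0) 1 \<omega>" using 0 Z0 unfolding alv_def by (auto simp: le_Suc_eq)
  thus ?case by auto
next
  case (Suc m)
  show ?case
  proof (cases "Z (Suc m) \<omega> \<le> r")
    case True
    have "alv (Suc m) (max r z0) 1 \<omega>" using True Suc.prems unfolding alv_def
      by (auto simp: le_Suc_eq)
    thus ?thesis by (intro exI[of _ "Suc m"]) auto
  next
    case False
    then obtain j where j: "j < Suc m" "alv j (max r z0) (Suc m - j) \<omega>" using Suc.IH by auto
    have "alv j (max r z0) (Suc (Suc m) - j) \<omega>" using j Suc.prems unfolding alv_def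
      by (auto simp: le_Suc_eq Suc_diff_le)
    thus ?thesis using j by (intro exI[of _ j]) auto
  qed
qed

theorem scal_bound: "\<exists>B::real. \<forall>n. (\<integral>\<^sup>+\<omega>. ennreal (Z n \<omega> ^ 2) \<partial>M) \<le> ennreal B"
proof -
  define S where "S = max r z0"
  have r0: "0 \<le> r" using rC Cpos by linarith
  have S0: "0 \<le> S" using r0 by (simp add: S_def)
  define Kr where "Kr = 201 * (8*((1+S)^4 + C))"
  have Kr0: "0 \<le> Kr" using S0 Cpos unfolding Kr_def by simp
  have Kdef: "201 * ennreal (8*((1+S)^4 + C)) = ennreal Kr"
    unfolding Kr_def using S0 Cpos by (simp add: ennreal_mult)
  have bnd: "\<And>j L. bb j S 2 L \<le> ennreal Kr * ennreal (1 / (real L + 1)^2)"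
    using bb2_bound[OF S0] unfolding Kdef by (intro ennr_div) auto
  have main: "(\<integral>\<^sup>+\<omega>. ennreal (Z n \<omega> ^ 2) \<partial>M) \<le> ennreal (r^2 + z0^2 + 2 * Kr)" for n
  proof (cases n)
    case 0
    have "(\<integral>\<^sup>+\<omega>. ennreal (Z n \<omega> ^ 2) \<partial>M) = ennreal (z0^2)"
      using 0 Z0 by (simp add: P.emeasure_space_1)
    also have "\<dots> \<le> ennreal (r^2 + z0^2 + 2 * Kr)" using Kr0 by (intro ennreal_leI) auto
    finally show ?thesis .
  next
    case (Suc m)
    have pw: "ennreal (Z n \<omega> ^ 2) \<le> ennreal (r^2) +
        (\<Sum>j<n. (if alv j S (Suc (n - Suc j)) \<omega> then ennreal (Z (j + Suc (n - Suc j)) \<omega> ^ 2) else 0))" for \<omega>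
    proof (cases "r < Z n \<omega>")
      case True
      then obtain j where j: "j < n" "alv j S (n - j) \<omega>" using exc[of m \<omega>] Suc unfolding S_def by auto
      have e: "Suc (n - Suc j) = n - j" "j + Suc (n - Suc j) = n" using j by auto
      have "ennreal (Z n \<omega> ^ 2) = (if alv j S (Suc (n - Suc j)) \<omega> then ennreal (Z (j + Suc (n - Suc j)) \<omega> ^ 2) else 0)"
        using j e by simp
      also have "\<dots> \<le> (\<Sum>j<n. (if alv j S (Suc (n - Suc j)) \<omega> then ennreal (Z (j + Suc (n - Suc j)) \<omega> ^ 2) else 0))"
        using j by (intro member_le_sum) auto
      finally show ?thesis by (simp add: add_increasing)
    next
      case False
      hence "Z n \<omega> ^ 2 \<le> r^2" using Zpos[of n \<omega>] by (intro power_mono) auto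
      hence "ennreal (Z n \<omega> ^ 2) \<le> ennreal (r^2)" by (rule ennreal_leI)
      thus ?thesis by (simp add: add_increasing2)
    qed
    have "(\<integral>\<^sup>+\<omega>. ennreal (Z n \<omega> ^ 2) \<partial>M) \<le> (\<integral>\<^sup>+\<omega>. ennreal (r^2) +
        (\<Sum>j<n. (if alv j S (Suc (n - Suc j)) \<omega> then ennreal (Z (j + Suc (n - Suc j)) \<omega> ^ 2) else 0)) \<partial>M)"
      by (intro nn_integral_mono pw)
    also have "\<dots> = ennreal (r^2) + (\<Sum>j<n. bb j S 2 (n - Suc j))"
      unfolding bb_def by (subst nn_integral_add) (auto simp: nn_integral_sum P.emeasure_space_1)
    also have "\<dots> \<le> ennreal (r^2) + (\<Sum>j<n. ennreal Kr * ennreal (1 / (real (n - Suc j) + 1)^2))"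
      by (intro add_left_mono sum_mono bnd)
    also have "(\<Sum>j<n. ennreal Kr * ennreal (1 / (real (n - Suc j) + 1)^2))
        = ennreal Kr * ennreal (\<Sum>L<n. 1 / (real L + 1)^2)"
      by (subst sum.nat_diff_reindex[of "\<lambda>L. ennreal Kr * ennreal (1 / (real L + 1)^2)" n])
         (simp add: sum_distrib_left[symmetric])
    also have "\<dots> \<le> ennreal Kr * ennreal 2"
    proof -
      have "0 \<le> 2 / (real n + 1)" by simp
      hence "(\<Sum>L<n. 1 / (real L + 1)^2) \<le> 2" using inv_sq_sum[of n] by linarith
      thus ?thesis by (intro mult_left_mono ennreal_leI) auto
    qed
    also have "ennreal (r^2) + ennreal Kr * ennreal 2 \<le> ennreal (r^2 + z0^2 + 2 * Kr)"
    proof -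
      have "ennreal Kr * ennreal 2 = ennreal (Kr * 2)" using Kr0 by (intro ennreal_mult[symmetric]) auto
      hence "ennreal Kr * ennreal 2 = ennreal (2 * Kr)" by (simp add: mult.commute)
      moreover have "ennreal (r^2) + ennreal (2 * Kr) = ennreal (r^2 + 2 * Kr)"
        using Kr0 by (intro ennreal_plus[symmetric]) auto
      moreover have "ennreal (r^2 + 2 * Kr) \<le> ennreal (r^2 + z0^2 + 2 * Kr)" by (intro ennreal_leI) simp
      ultimately show ?thesis by simp
    qed
    finally show ?thesis by simp
  qed
  thus ?thesis by blast
qed

end

(* ---- part T9 ---- *)

lemma orth_norm: "orthogonal_matrix (Q::real^'n^'n) \<Longrightarrow> norm (Q *v v) = norm v"
  using orthogonal_transformation_matrix[of "\<lambda>x. Q *v x"]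
  by (simp add: matrix_vector_mul_linear orthogonal_transformation_norm)

lemma matpow_orth: "orthogonal_matrix A \<Longrightarrow> orthogonal_matrix (matpow A n)"
  by (induction n) (auto intro: orthogonal_matrix_mul orthogonal_matrix_id)

lemma reach_decomp:
  fixes A :: "real^'d^'d" and B :: "real^'m^'d"
  assumes "reachable_in A B k"
  shows "\<exists>c. \<forall>j::'d. (\<Sum>i<k. (matpow A i ** B) *v c j i) = axis j 1"
proof -
  let ?S = "\<Union>i<k. columns (matpow A i ** B)"
  let ?R = "{v. \<exists>u. v = (\<Sum>i<k. (matpow A i ** B) *v u i)}"
  have "dim ?S = DIM(real^'d)" using assms unfolding reachable_in_def reach_rank_def by simp
  hence "vec.dim ?S = vec.dim (UNIV::(real^'d) set)" by (simp add: dim_vec_eq vec_dim_card)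
  hence "vec.span ?S = vec.span UNIV" by (intro vec.dim_eq_span) auto
  hence "vec.span ?S = UNIV" by (simp only: vec.span_UNIV)
  hence sp: "span ?S = UNIV" by (simp only: span_vec_eq)
  have sub: "subspace ?R"
    unfolding subspace_def
  proof (intro conjI ballI allI)
    show "0 \<in> ?R" by (intro CollectI exI[of _ "\<lambda>_. 0"]) simp
    fix x y assume "x \<in> ?R" "y \<in> ?R"
    then obtain u u' where "x = (\<Sum>i<k. (matpow A i ** B) *v u i)" "y = (\<Sum>i<k. (matpow A i ** B) *v u' i)" by auto
    thus "x + y \<in> ?R"
      by (intro CollectI exI[of _ "\<lambda>i. u i + u' i"]) (simp add: matrix_vector_right_distrib sum.distrib)
  next
    fix c :: real and x assume "x \<in> ?R"
    then obtain u where "x = (\<Sum>i<k. (matpow A i ** B) *v u i)" by auto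
    thus "c *\<^sub>R x \<in> ?R"
      by (intro CollectI exI[of _ "\<lambda>i. c *\<^sub>R u i"]) (simp add: scaleR_sum_right matrix_vector_mult_scaleR)
  qed
  have "?S \<subseteq> ?R"
  proof
    fix v assume "v \<in> ?S"
    then obtain i0 where i0: "i0 < k" "v \<in> columns (matpow A i0 ** B)" by auto
    then obtain j where "v = column j (matpow A i0 ** B)" unfolding columns_def by auto
    hence v: "v = (matpow A i0 ** B) *v axis j 1" by (simp add: matrix_vector_mult_basis)
    show "v \<in> ?R"
    proof (intro CollectI exI[of _ "\<lambda>i. if i = i0 then axis j 1 else 0"])
      have "(\<Sum>i<k. (matpow A i ** B) *v (if i = i0 then axis j 1 else 0))
          = (\<Sum>i<k. if i = i0 then (matpow A i ** B) *v axis j 1 else 0)"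
        by (intro sum.cong) auto
      also have "\<dots> = (matpow A i0 ** B) *v axis j 1" using i0 by (simp add: sum.delta)
      finally show "v = (\<Sum>i<k. (matpow A i ** B) *v (if i = i0 then axis j 1 else 0))" using v by simp
    qed
  qed
  hence "span ?S \<subseteq> ?R" using sub by (rule span_minimal)
  hence "\<forall>j::'d. \<exists>u. axis j 1 = (\<Sum>i<k. (matpow A i ** B) *v u i)" using sp by auto
  then obtain c where "\<forall>j::'d. axis j 1 = (\<Sum>i<k. (matpow A i ** B) *v c j i)" by metis
  thus ?thesis by metis
qed


(* ---- part T10 ---- *)

lemma mv_meas[measurable]: "(\<lambda>x. (Q::real^'n^'m) *v x) \<in> borel_measurable borel"
  by (intro borel_measurable_continuous_onI matrix_vector_mult_linear_continuous_on)

lemma nth_meas[measurable (raw)]: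
  "f \<in> borel_measurable M \<Longrightarrow> (\<lambda>x. (f x :: real^'n) $ j) \<in> borel_measurable M"
proof -
  assume f: "f \<in> borel_measurable M"
  have "(\<lambda>v::real^'n. v $ j) \<in> borel_measurable borel"
    by (intro borel_measurable_continuous_onI continuous_intros)
  from measurable_compose[OF f this] show ?thesis by simp
qed

lemma controller:
  fixes A :: "real^'d^'d" and B :: "real^'m^'d" and r :: real
  assumes orth: "orthogonal_matrix A" and reach: "reachable_in A B k" and r: "0 < r"
  shows "\<exists>f::nat \<Rightarrow> real^'d \<Rightarrow> real^'m. \<exists>\<rho>>0.
     (\<forall>i. f i \<in> borel_measurable borel) \<and> (\<forall>i<k. \<forall>x. norm (f i x) \<le> \<rho>) \<and>
     (\<forall>x. norm (matpow A k *v x + (\<Sum>i<k. matpow A (k - 1 - i) *v (B *v f i x))) \<le> max (norm x - r) 0)"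
proof -
  obtain c :: "'d \<Rightarrow> nat \<Rightarrow> real^'m" where c: "\<And>j. (\<Sum>i<k. (matpow A i ** B) *v c j i) = axis j 1"
    using reach_decomp[OF reach] by blast
  define vv where "vv = (\<lambda>x::real^'d. - (min 1 (r / norm x)) *\<^sub>R (matpow A k *v x))"
  define UU where "UU = (\<lambda>(v::real^'d) i. \<Sum>j\<in>UNIV. (v $ j) *\<^sub>R c j i)"
  define f where "f = (\<lambda>i x. UU (vv x) (k - 1 - i))"
  define cc where "cc = (\<Sum>i<k. \<Sum>j\<in>UNIV. norm (c j i))"
  have ok: "orthogonal_matrix (matpow A k)" using orth by (rule matpow_orth)
  have vvn: "norm (vv x) \<le> r" for x
  proof (cases "x = 0")
    case False
    hence nx: "0 < norm x" by simp
    have "norm (vv x) = min 1 (r / norm x) * norm x"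
      unfolding vv_def using r nx by (simp add: orth_norm[OF ok])
    also have "\<dots> \<le> (r / norm x) * norm x" using nx by (intro mult_right_mono) auto
    also have "\<dots> = r" using nx by simp
    finally show ?thesis .
  qed (simp add: vv_def r less_imp_le)
  have UUn: "norm (UU v i) \<le> norm v * (\<Sum>j\<in>UNIV. norm (c j i))" for v i
  proof -
    have "norm (UU v i) \<le> (\<Sum>j\<in>UNIV. norm ((v $ j) *\<^sub>R c j i))" unfolding UU_def by (rule norm_sum)
    also have "\<dots> \<le> (\<Sum>j\<in>UNIV. norm v * norm (c j i))"
      by (intro sum_mono) (simp add: mult_right_mono component_le_norm_cart)
    finally show ?thesis by (simp add: sum_distrib_left)
  qed
  have fb: "norm (f i x) \<le> r * cc" if "i < k" for i x
  proof -
    have "norm (f i x) \<le> norm (vv x) * (\<Sum>j\<in>UNIV. norm (c j (k - 1 - i)))" unfolding f_def by (rule UUn)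
    also have "\<dots> \<le> r * (\<Sum>j\<in>UNIV. norm (c j (k - 1 - i)))" using vvn by (intro mult_right_mono) (auto intro: sum_nonneg)
    also have "\<dots> \<le> r * cc" unfolding cc_def using that r
      by (intro mult_left_mono member_le_sum[of "k - 1 - i" "{..<k}"]) (auto intro: sum_nonneg)
    finally show ?thesis .
  qed
  have sumf: "(\<Sum>i<k. matpow A (k - 1 - i) *v (B *v f i x)) = vv x" for x
  proof -
    have "(\<Sum>i<k. matpow A (k - 1 - i) *v (B *v f i x)) = (\<Sum>i<k. matpow A (k - Suc i) *v (B *v UU (vv x) (k - Suc i)))"
      unfolding f_def by simp
    also have "\<dots> = (\<Sum>i<k. matpow A i *v (B *v UU (vv x) i))"
      by (rule sum.nat_diff_reindex)
    also have "\<dots> = (\<Sum>i<k. \<Sum>j\<in>UNIV. (vv x $ j) *\<^sub>R ((matpow A i ** B) *v c j i))"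
    proof (intro sum.cong refl)
      fix i
      have "matpow A i *v (B *v UU (vv x) i) = (matpow A i ** B) *v UU (vv x) i" by (rule matrix_vector_mul_assoc)
      also have "\<dots> = (\<Sum>j\<in>UNIV. (matpow A i ** B) *v ((vv x $ j) *\<^sub>R c j i))"
        unfolding UU_def by (rule linear_sum[OF matrix_vector_mul_linear])
      also have "\<dots> = (\<Sum>j\<in>UNIV. (vv x $ j) *\<^sub>R ((matpow A i ** B) *v c j i))"
        by (simp add: matrix_vector_mult_scaleR)
      finally show "matpow A i *v (B *v UU (vv x) i) = (\<Sum>j\<in>UNIV. (vv x $ j) *\<^sub>R ((matpow A i ** B) *v c j i))" .
    qed
    also have "\<dots> = (\<Sum>j\<in>UNIV. (vv x $ j) *\<^sub>R (\<Sum>i<k. (matpow A i ** B) *v c j i))"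
      by (subst sum.swap) (simp add: scaleR_sum_right)
    also have "\<dots> = (\<Sum>j\<in>UNIV. (vv x $ j) *s axis j 1)" by (simp add: c scalar_mult_eq_scaleR)
    also have "\<dots> = vv x" by (rule basis_expansion)
    finally show ?thesis .
  qed
  have psi: "norm (matpow A k *v x + vv x) \<le> max (norm x - r) 0" for x
  proof -
    define m where "m = min 1 (r / norm x)"
    have m1: "m \<le> 1" "0 \<le> m" unfolding m_def using r by auto
    have "matpow A k *v x + vv x = (1 - m) *\<^sub>R (matpow A k *v x)"
      unfolding vv_def m_def by (simp add: algebra_simps)
    hence "norm (matpow A k *v x + vv x) = (1 - m) * norm x" using m1 by (simp add: orth_norm[OF ok])
    also have "\<dots> \<le> max (norm x - r) 0"
    proof (cases "norm x \<le> r")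
      case True
      show ?thesis
      proof (cases "x = 0")
        case False
        hence "1 \<le> r / norm x" using True by simp
        hence "m = 1" unfolding m_def by simp
        thus ?thesis by simp
      qed simp
    next
      case False
      hence "r / norm x \<le> 1" using r by (simp add: divide_le_eq_1)
      hence "m = r / norm x" unfolding m_def by simp
      moreover have "0 < norm x" using False r by linarith
      ultimately have "(1 - m) * norm x = norm x - r" by (simp add: algebra_simps)
      thus ?thesis by simp
    qed
    finally show ?thesis .
  qed
  have fm: "f i \<in> borel_measurable borel" for i
    unfolding f_def UU_def vv_def by measurable
  have cc0: "0 \<le> cc" unfolding cc_def by (intro sum_nonneg) simp_all
  have rho: "0 < r * cc + 1" using r cc0 by (smt (verit) mult_nonneg_nonneg)
  have fb': "\<forall>i<k. \<forall>x. norm (f i x) \<le> r * cc + 1" using fb by (metis add.commute add_increasing zero_less_one less_imp_le)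
  have th: "\<forall>x. norm (matpow A k *v x + (\<Sum>i<k. matpow A (k - 1 - i) *v (B *v f i x))) \<le> max (norm x - r) 0"
    using psi sumf by simp
  show ?thesis using rho fb' fm th by blast
qed


(* ---- part T11 ---- *)

lemma mv_meas'[measurable (raw)]:
  "g \<in> borel_measurable M \<Longrightarrow> (\<lambda>x. (Q::real^'n^'m) *v g x) \<in> borel_measurable M"
  using measurable_compose[OF _ mv_meas] by blast

lemma sum_step:
  fixes A :: "real^'d^'d" and y :: "nat \<Rightarrow> real^'d"
  shows "A *v (\<Sum>i<s. matpow A (s - 1 - i) *v y i) + y s = (\<Sum>i<Suc s. matpow A (Suc s - 1 - i) *v y i)"
proof -
  have "A *v (\<Sum>i<s. matpow A (s - 1 - i) *v y i) = (\<Sum>i<s. A *v (matpow A (s - 1 - i) *v y i))"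
    by (rule linear_sum[OF matrix_vector_mul_linear])
  also have "\<dots> = (\<Sum>i<s. matpow A (Suc s - 1 - i) *v y i)"
  proof (intro sum.cong refl)
    fix i assume "i \<in> {..<s}"
    hence "Suc s - 1 - i = Suc (s - 1 - i)" by auto
    thus "A *v (matpow A (s - 1 - i) *v y i) = matpow A (Suc s - 1 - i) *v y i"
      by (simp add: matrix_vector_mul_assoc)
  qed
  finally show ?thesis by (simp add: matrix_vector_mul_lid)
qed

lemma block_formula:
  assumes k: "0 < k" and s: "s \<le> k"
  shows "closed_loop A B k f w x (n*k + s) \<omega> =
     matpow A s *v closed_loop A B k f w x (n*k) \<omega>
     + (\<Sum>i<s. matpow A (s - 1 - i) *v (B *v f i (closed_loop A B k f w x (n*k) \<omega>)))
     + (\<Sum>i<s. matpow A (s - 1 - i) *v w (n*k + i) \<omega>)"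
  using s
proof (induction s)
  case 0 thus ?case by (simp add: matrix_vector_mul_lid)
next
  case (Suc s)
  let ?X = "closed_loop A B k f w x (n*k) \<omega>"
  have sk: "s < k" using Suc by simp
  have md: "(n*k + s) mod k = s" "(n*k + s) div k = n" using sk by auto
  have "closed_loop A B k f w x (n*k + Suc s) \<omega> = A *v closed_loop A B k f w x (n*k + s) \<omega>
      + B *v f s ?X + w (n*k+s) \<omega>"
    using md by simp
  also have "\<dots> = matpow A (Suc s) *v ?X
     + (A *v (\<Sum>i<s. matpow A (s - 1 - i) *v (B *v f i ?X)) + B *v f s ?X)
     + (A *v (\<Sum>i<s. matpow A (s - 1 - i) *v w (n*k + i) \<omega>) + w (n*k+s) \<omega>)"
    using Suc sk by (simp add: matrix_vector_right_distrib matrix_vector_mul_assoc algebra_simps)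
  also have "\<dots> = matpow A (Suc s) *v ?X
     + (\<Sum>i<Suc s. matpow A (Suc s - 1 - i) *v (B *v f i ?X))
     + (\<Sum>i<Suc s. matpow A (Suc s - 1 - i) *v w (n*k + i) \<omega>)"
    by (simp only: sum_step[of A s "\<lambda>i. B *v f i ?X"] sum_step[of A s "\<lambda>i. w (n*k + i) \<omega>"])
  finally show ?case .
qed

lemma cl_cong:
  assumes "\<And>i. i < t \<Longrightarrow> w i \<omega> = w' i \<omega>'"
  shows "closed_loop A B k f w x t \<omega> = closed_loop A B k f w' x t \<omega>'"
  using assms
proof (induction t rule: less_induct)
  case (less t)
  show ?case
  proof (cases t)
    case (Suc s)
    have le: "(s div k) * k \<le> s" by (simp add: div_times_less_eq_dividend)
    have "closed_loop A B k f w x s \<omega> = closed_loop A B k f w' x s \<omega>'"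
      using less.IH[of s] less.prems Suc by auto
    moreover have "closed_loop A B k f w x ((s div k) * k) \<omega> = closed_loop A B k f w' x ((s div k) * k) \<omega>'"
      using less.IH[of "(s div k) * k"] less.prems Suc le by auto
    ultimately show ?thesis using Suc less.prems by simp
  qed simp
qed

lemma cl_meas_Pi:
  assumes fm: "\<And>i. f i \<in> borel_measurable borel" and I: "{..<t} \<subseteq> I"
  shows "(\<lambda>p. closed_loop A B k f (\<lambda>i p. p i) x t p) \<in> borel_measurable (PiM I (\<lambda>_. borel))"
  using I
proof (induction t rule: less_induct)
  case (less t)
  show ?case
  proof (cases t)
    case 0 thus ?thesis by simp
  next
    case (Suc s)
    have le: "(s div k) * k \<le> s" by (simp add: div_times_less_eq_dividend)
    have m1[measurable]: "(\<lambda>p. closed_loop A B k f (\<lambda>i p. p i) x s p) \<in> borel_measurable (PiM I (\<lambda>_. borel))"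
      using less.IH[of s] less.prems Suc by (simp add: subset_eq)
    have m2[measurable]: "(\<lambda>p. closed_loop A B k f (\<lambda>i p. p i) x ((s div k) * k) p) \<in> borel_measurable (PiM I (\<lambda>_. borel))"
    proof -
      have "{..<(s div k) * k} \<subseteq> I"
      proof
        fix y assume "y \<in> {..<(s div k) * k}"
        hence "y < s div k * k" by simp
        hence "y < s" using le by (rule order_less_le_trans)
        hence "y < Suc s" by simp
        thus "y \<in> I" using less.prems Suc by auto
      qed
      moreover have "(s div k) * k < Suc s" using le by (rule le_imp_less_Suc)
      hence "(s div k) * k < t" using Suc by simp
      ultimately show ?thesis using less.IH by blast
    qed
    have sI: "s \<in> I" using less.prems Suc by auto
    have m3[measurable]: "(\<lambda>p. f (s mod k) (closed_loop A B k f (\<lambda>i p. p i) x ((s div k) * k) p)) \<in> borel_measurable (PiM I (\<lambda>_. borel))"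
      using measurable_compose[OF m2 fm] .
    have m4[measurable]: "(\<lambda>p::nat \<Rightarrow> real^'a. p s) \<in> borel_measurable (PiM I (\<lambda>_. borel))"
      using sI by measurable
    show ?thesis unfolding Suc by simp
  qed
qed


(* ---- part T12 ---- *)

lemma pow4_sum: fixes y :: "'i \<Rightarrow> real"
  shows "(\<Sum>i\<in>I. y i)^4 \<le> real (card I)^3 * (\<Sum>i\<in>I. (y i)^4)"
proof -
  have 1: "(\<Sum>i\<in>I. y i)^2 \<le> (\<Sum>i\<in>I. (y i)^2) * card I" by (rule sum_squared_le_sum_of_squares)
  have 2: "(\<Sum>i\<in>I. (y i)^2)^2 \<le> (\<Sum>i\<in>I. ((y i)^2)^2) * card I" by (rule sum_squared_le_sum_of_squares)
  have "(\<Sum>i\<in>I. y i)^4 = ((\<Sum>i\<in>I. y i)^2)^2" by simp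
  also have "\<dots> \<le> ((\<Sum>i\<in>I. (y i)^2) * card I)^2" using 1 by (intro power_mono) auto
  also have "\<dots> = (\<Sum>i\<in>I. (y i)^2)^2 * (real (card I))^2" by (simp add: power_mult_distrib)
  also have "\<dots> \<le> ((\<Sum>i\<in>I. ((y i)^2)^2) * card I) * (real (card I))^2"
    using 2 by (intro mult_right_mono) auto
  also have "\<dots> = real (card I)^3 * (\<Sum>i\<in>I. (y i)^4)"
    by (simp add: power2_eq_square power3_eq_cube power4_eq_xxxx mult.assoc)
  finally show ?thesis .
qed

lemma D4:
  assumes P: "prob_space M" and wm: "\<And>t. w t \<in> borel_measurable M"
    and mom: "\<And>t. (\<integral>\<^sup>+\<omega>. ennreal (norm (w t \<omega>) ^ 4) \<partial>M) \<le> ennreal C4" and C4: "0 \<le> C4"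
  shows "(\<integral>\<^sup>+\<omega>. ennreal ((\<Sum>i<k. norm (w (n*k+i) \<omega> :: real^'d)) ^ 4) \<partial>M) \<le> ennreal (real k ^ 4 * C4)"
proof -
  have "(\<integral>\<^sup>+\<omega>. ennreal ((\<Sum>i<k. norm (w (n*k+i) \<omega>)) ^ 4) \<partial>M)
      \<le> (\<integral>\<^sup>+\<omega>. (\<Sum>i<k. ennreal (real k ^ 3) * ennreal (norm (w (n*k+i) \<omega>) ^ 4)) \<partial>M)"
  proof (intro nn_integral_mono)
    fix \<omega>
    have "(\<Sum>i<k. norm (w (n*k+i) \<omega>)) ^ 4 \<le> real k ^ 3 * (\<Sum>i<k. norm (w (n*k+i) \<omega>) ^ 4)"
      using pow4_sum[of "\<lambda>i. norm (w (n*k+i) \<omega>)" "{..<k}"] by simp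
    hence "ennreal ((\<Sum>i<k. norm (w (n*k+i) \<omega>)) ^ 4) \<le> ennreal (real k ^ 3 * (\<Sum>i<k. norm (w (n*k+i) \<omega>) ^ 4))"
      by (rule ennreal_leI)
    also have "\<dots> = ennreal (real k ^ 3) * ennreal (\<Sum>i<k. norm (w (n*k+i) \<omega>) ^ 4)"
      by (rule ennreal_mult) (auto intro: sum_nonneg)
    also have "ennreal (\<Sum>i<k. norm (w (n*k+i) \<omega>) ^ 4) = (\<Sum>i<k. ennreal (norm (w (n*k+i) \<omega>) ^ 4))"
      by (rule sum_ennreal[symmetric]) auto
    also have "ennreal (real k ^ 3) * (\<Sum>i<k. ennreal (norm (w (n*k+i) \<omega>) ^ 4))
       = (\<Sum>i<k. ennreal (real k ^ 3) * ennreal (norm (w (n*k+i) \<omega>) ^ 4))"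
      by (rule sum_distrib_left)
    finally show "ennreal ((\<Sum>i<k. norm (w (n*k+i) \<omega>)) ^ 4) \<le> (\<Sum>i<k. ennreal (real k ^ 3) * ennreal (norm (w (n*k+i) \<omega>) ^ 4))" .
  qed
  also have "\<dots> = (\<Sum>i<k. ennreal (real k ^ 3) * (\<integral>\<^sup>+\<omega>. ennreal (norm (w (n*k+i) \<omega>) ^ 4) \<partial>M))"
    using wm by (subst nn_integral_sum) (auto simp: nn_integral_cmult)
  also have "\<dots> \<le> (\<Sum>i<k. ennreal (real k ^ 3) * ennreal C4)"
    by (intro sum_mono mult_left_mono mom) auto
  also have "\<dots> = ennreal (real k ^ 4 * C4)"
  proof -
    have e: "real k * real k ^ 3 = real k ^ 4" by (simp add: eval_nat_numeral)
    show ?thesis using C4 e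
      by (simp add: ennreal_mult[symmetric] ennreal_of_nat_eq_real_of_nat algebra_simps del: of_nat_power)
  qed
  finally show ?thesis .
qed


(* ---- part T13 ---- *)

lemma cl_meas_M:
  assumes fm: "\<And>i. f i \<in> borel_measurable borel" and wm: "\<And>t. w t \<in> borel_measurable M"
  shows "(\<lambda>\<omega>. closed_loop A B k f w x t \<omega>) \<in> borel_measurable M"
proof -
  have e: "closed_loop A B k f w x t \<omega> = closed_loop A B k f (\<lambda>i p. p i) x t (restrict (\<lambda>i. w i \<omega>) {..<t})" for \<omega>
    by (rule cl_cong) simp
  have r: "(\<lambda>\<omega>. restrict (\<lambda>i. w i \<omega>) {..<t}) \<in> measurable M (PiM {..<t} (\<lambda>_. borel))"
    using wm by (intro measurable_restrict) auto
  show ?thesis unfolding e using measurable_compose[OF r cl_meas_Pi[OF fm, of t "{..<t}"]] by simp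
qed

lemma ind_lemma:
  fixes w :: "nat \<Rightarrow> 'a \<Rightarrow> real^'d"
  assumes P: "prob_space M" and ind: "prob_space.indep_vars M (\<lambda>_. borel) w UNIV"
    and fm: "\<And>i. f i \<in> borel_measurable borel"
    and F: "F \<in> borel_measurable (PiM UNIV (\<lambda>_. borel) \<Otimes>\<^sub>M borel)"
  shows "(\<integral>\<^sup>+\<omega>. F (\<lambda>i. norm (closed_loop A B k f w x (min i n * k) \<omega>), \<Sum>i<k. norm (w (n*k+i) \<omega>)) \<partial>M)
    = (\<integral>\<^sup>+\<omega>. \<integral>\<^sup>+\<omega>'. F (\<lambda>i. norm (closed_loop A B k f w x (min i n * k) \<omega>), \<Sum>i<k. norm (w (n*k+i) \<omega>')) \<partial>M \<partial>M)"
proof -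
  interpret prob_space M by (rule P)
  define Pp where "Pp = (\<lambda>\<omega>. restrict (\<lambda>i. w i \<omega>) {..<n*k})"
  define Qq where "Qq = (\<lambda>\<omega>. restrict (\<lambda>i. w i \<omega>) {n*k..<n*k+k})"
  have iv: "indep_var (PiM {..<n*k} (\<lambda>_. borel)) Pp (PiM {n*k..<n*k+k} (\<lambda>_. borel)) Qq"
    unfolding Pp_def Qq_def by (rule indep_var_restrict[OF ind]) auto
  define H where "H = (\<lambda>p i. norm (closed_loop A B k f (\<lambda>i p. p i) x (min i n * k) p))"
  define G where "G = (\<lambda>q. \<Sum>i<k. norm (q (n*k+i) :: real^'d))"
  have Hm: "H \<in> measurable (PiM {..<n*k} (\<lambda>_. borel)) (PiM UNIV (\<lambda>_. borel))"
    unfolding H_def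
  proof (rule measurable_PiM_single')
    fix i :: nat
    have "{..<min i n * k} \<subseteq> {..<n*k}" by auto
    from cl_meas_Pi[OF fm this]
    show "(\<lambda>p. norm (closed_loop A B k f (\<lambda>i p. p i) x (min i n * k) p)) \<in> borel_measurable (PiM {..<n*k} (\<lambda>_. borel))"
      by measurable
  qed auto
  have Gm: "G \<in> borel_measurable (PiM {n*k..<n*k+k} (\<lambda>_. borel))"
    unfolding G_def
  proof (intro borel_measurable_sum)
    fix i assume "i \<in> {..<k}"
    hence "n*k+i \<in> {n*k..<n*k+k}" by auto
    hence "(\<lambda>q::nat\<Rightarrow>real^'d. q (n*k+i)) \<in> borel_measurable (PiM {n*k..<n*k+k} (\<lambda>_. borel))"
      by (rule measurable_component_singleton)
    thus "(\<lambda>q::nat\<Rightarrow>real^'d. norm (q (n*k+i))) \<in> borel_measurable (PiM {n*k..<n*k+k} (\<lambda>_. borel))"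
      by measurable
  qed
  define G' where "G' = (\<lambda>q (_::nat). G q)"
  have Gm': "G' \<in> measurable (PiM {n*k..<n*k+k} (\<lambda>_. borel)) (PiM UNIV (\<lambda>_. borel))"
    unfolding G'_def by (rule measurable_PiM_single') (use Gm in auto)
  have iv2: "indep_var (PiM UNIV (\<lambda>_. borel)) (H \<circ> Pp) (PiM UNIV (\<lambda>_. borel)) (G' \<circ> Qq)"
    by (rule indep_var_compose[OF iv Hm Gm'])
  define F' where "F' = (\<lambda>(\<eta>::nat \<Rightarrow> real, \<zeta>::nat \<Rightarrow> real). F (\<eta>, \<zeta> 0))"
  have F'm: "F' \<in> borel_measurable (PiM UNIV (\<lambda>_. borel) \<Otimes>\<^sub>M PiM UNIV (\<lambda>_. borel))"
    unfolding F'_def using F by measurable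
  have eH: "(H \<circ> Pp) \<omega> = (\<lambda>i. norm (closed_loop A B k f w x (min i n * k) \<omega>))" for \<omega>
  proof -
    have "closed_loop A B k f (\<lambda>i p. p i) x (min i n * k) (Pp \<omega>) = closed_loop A B k f w x (min i n * k) \<omega>" for i
    proof (rule cl_cong)
      fix j assume "j < min i n * k"
      moreover have "min i n * k \<le> n * k" by simp
      ultimately have "j < n * k" by (rule order_less_le_trans)
      thus "Pp \<omega> j = w j \<omega>" unfolding Pp_def by simp
    qed
    thus ?thesis unfolding H_def by (simp add: comp_def)
  qed
  have eG: "(G \<circ> Qq) \<omega> = (\<Sum>i<k. norm (w (n*k+i) \<omega>))" for \<omega>
    unfolding G_def Qq_def by simp
  have "(\<integral>\<^sup>+\<omega>. F' ((H \<circ> Pp) \<omega>, (G' \<circ> Qq) \<omega>) \<partial>M) = (\<integral>\<^sup>+\<omega>. \<integral>\<^sup>+\<omega>'. F' ((H \<circ> Pp) \<omega>, (G' \<circ> Qq) \<omega>') \<partial>M \<partial>M)"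
    by (rule indep_nn[OF P iv2 F'm])
  moreover have "F' ((H \<circ> Pp) \<omega>, (G' \<circ> Qq) \<omega>') = F ((H \<circ> Pp) \<omega>, (G \<circ> Qq) \<omega>')" for \<omega> \<omega>'
    unfolding F'_def G'_def by simp
  ultimately show ?thesis unfolding eH eG by simp
qed

lemma sq3: fixes a b c :: real shows "(a+b+c)^2 \<le> 3*(a^2+b^2+c^2)"
proof -
  have "0 \<le> (a-b)^2 + (b-c)^2 + (c-a)^2" by simp
  thus ?thesis by (simp add: power2_eq_square algebra_simps)
qed


(* ---- part T14 ---- *)

theorem lemma5:
  fixes A :: "real^'d^'d" and B :: "real^'m^'d" and k :: nat
    and M :: "'a measure" and w :: "nat \<Rightarrow> 'a \<Rightarrow> real^'d"
    and Q :: "nat \<Rightarrow> real^'d^'d" and C4 :: real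
  assumes "orthogonal_matrix A"
    and "reachable_in A B k"
    and "prob_space M"
    and "\<And>t. w t \<in> borel_measurable M"
    and "prob_space.indep_vars M (\<lambda>_. borel) w UNIV"
    and "\<And>t. integrable M (w t)"
    and "\<And>t. (\<integral>\<omega>. w t \<omega> \<partial>M) = 0"
    and "\<And>t i j. integrable M (\<lambda>\<omega>. w t \<omega> $ i * w t \<omega> $ j)"
    and "\<And>t i j. (\<integral>\<omega>. w t \<omega> $ i * w t \<omega> $ j \<partial>M) = Q t $ i $ j"
    and "C4 > 0"
    and "\<And>t. (\<integral>\<^sup>+\<omega>. ennreal (norm (w t \<omega>) ^ 4) \<partial>M) \<le> ennreal C4"
  shows "\<exists>\<rho>::real. \<rho> > 0 \<and> (\<exists>f :: nat \<Rightarrow> real^'d \<Rightarrow> real^'m.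
           (\<forall>i<k. f i \<in> borel_measurable borel) \<and>
           (\<forall>i<k. \<forall>x. norm (f i x) \<le> \<rho>) \<and>
           (\<forall>x. (SUP t. \<integral>\<^sup>+\<omega>. ennreal (norm (closed_loop A B k f w x t \<omega>) ^ 2) \<partial>M) < \<infinity>))"
proof -
  note orth = assms(1) and reach = assms(2) and Pr = assms(3) and wm[measurable] = assms(4)
    and ind = assms(5) and mom4 = assms(11)
  interpret P: prob_space M by (rule Pr)
  have C4: "0 \<le> C4" using assms(10) by simp
  have kpos: "0 < k"
  proof (rule ccontr)
    assume "\<not> 0 < k"
    hence "reach_rank A B k = 0" unfolding reach_rank_def by simp
    with reach show False unfolding reachable_in_def by simp
  qed
  define Cp where "Cp = real k ^ 4 * C4"
  have Cp0: "0 \<le> Cp" using C4 unfolding Cp_def by simp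
  define r where "r = Cp + 2"
  have r0: "0 < r" using Cp0 unfolding r_def by simp
  obtain f :: "nat \<Rightarrow> real^'d \<Rightarrow> real^'m" and \<rho> where \<rho>: "0 < \<rho>"
    and fm: "\<And>i. f i \<in> borel_measurable borel" and fb: "\<And>i x. i < k \<Longrightarrow> norm (f i x) \<le> \<rho>"
    and psi: "\<And>x. norm (matpow A k *v x + (\<Sum>i<k. matpow A (k - 1 - i) *v (B *v f i x))) \<le> max (norm x - r) 0"
    using controller[OF orth reach r0] by blast
  obtain KB where KB: "\<And>u. norm (B *v u) \<le> norm u * KB" and KB0: "0 \<le> KB"
    using bounded_linear.nonneg_bounded[OF matrix_vector_mul_bounded_linear[of B]] by blast
  have fin: "(SUP t. \<integral>\<^sup>+\<omega>. ennreal (norm (closed_loop A B k f w x t \<omega>) ^ 2) \<partial>M) < \<infinity>" for x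
  proof -
    define Z where "Z = (\<lambda>n \<omega>. norm (closed_loop A B k f w x (n*k) \<omega>))"
    define D where "D = (\<lambda>n \<omega>. \<Sum>i<k. norm (w (n*k+i) \<omega>))"
    have clm[measurable]: "\<And>t. (\<lambda>\<omega>. closed_loop A B k f w x t \<omega>) \<in> borel_measurable M"
      by (rule cl_meas_M[OF fm wm])
    have sc: "scal M Z D r (norm x) Cp"
    proof (rule scal.intro)
      show "prob_space M" by (rule Pr)
      show "\<And>n. Z n \<in> borel_measurable M" unfolding Z_def by measurable
      show "\<And>n. D n \<in> borel_measurable M" unfolding D_def by measurable
      show "\<And>n \<omega>. 0 \<le> Z n \<omega>" unfolding Z_def by simp
      show "\<And>n \<omega>. 0 \<le> D n \<omega>" unfolding D_def by (simp add: sum_nonneg)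
      show "\<And>\<omega>. Z 0 \<omega> = norm x" unfolding Z_def by simp
      show "0 \<le> Cp" by (rule Cp0)
      show "Cp + 2 \<le> r" unfolding r_def by simp
      show "\<And>n. (\<integral>\<^sup>+\<omega>. ennreal (D n \<omega> ^ 4) \<partial>M) \<le> ennreal Cp"
        unfolding D_def Cp_def by (rule D4[OF Pr wm mom4 C4])
      show "\<And>n F. F \<in> borel_measurable (PiM UNIV (\<lambda>_. borel) \<Otimes>\<^sub>M borel) \<Longrightarrow>
        (\<integral>\<^sup>+\<omega>. F (\<lambda>i. Z (min i n) \<omega>, D n \<omega>) \<partial>M)
          = (\<integral>\<^sup>+\<omega>. \<integral>\<^sup>+\<omega>'. F (\<lambda>i. Z (min i n) \<omega>, D n \<omega>') \<partial>M \<partial>M)"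
        unfolding Z_def D_def by (rule ind_lemma[OF Pr ind fm])
      show "\<And>n \<omega>. Z (Suc n) \<omega> \<le> max (Z n \<omega> - r) 0 + D n \<omega>"
      proof -
        fix n \<omega>
        let ?X = "closed_loop A B k f w x (n*k) \<omega>"
        have e: "Suc n * k = n * k + k" by simp
        have "closed_loop A B k f w x (Suc n * k) \<omega> =
           (matpow A k *v ?X + (\<Sum>i<k. matpow A (k - 1 - i) *v (B *v f i ?X)))
           + (\<Sum>i<k. matpow A (k - 1 - i) *v w (n*k + i) \<omega>)"
          unfolding e by (subst block_formula[OF kpos le_refl]) simp
        hence "Z (Suc n) \<omega> \<le> norm (matpow A k *v ?X + (\<Sum>i<k. matpow A (k - 1 - i) *v (B *v f i ?X)))
           + norm (\<Sum>i<k. matpow A (k - 1 - i) *v w (n*k + i) \<omega>)"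
          unfolding Z_def by (simp add: norm_triangle_ineq)
        also have "\<dots> \<le> max (Z n \<omega> - r) 0 + (\<Sum>i<k. norm (matpow A (k - 1 - i) *v w (n*k + i) \<omega>))"
          unfolding Z_def by (intro add_mono psi norm_sum)
        also have "(\<Sum>i<k. norm (matpow A (k - 1 - i) *v w (n*k + i) \<omega>)) = D n \<omega>"
          unfolding D_def by (simp add: orth_norm[OF matpow_orth[OF orth]])
        finally show "Z (Suc n) \<omega> \<le> max (Z n \<omega> - r) 0 + D n \<omega>" .
      qed
    qed
    obtain BZ0 where BZ0: "\<And>n. (\<integral>\<^sup>+\<omega>. ennreal (Z n \<omega> ^ 2) \<partial>M) \<le> ennreal BZ0"
      using scal.scal_bound[OF sc] by blast
    define BZ where "BZ = max BZ0 0"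
    have BZ0': "0 \<le> BZ" unfolding BZ_def by simp
    have BZ: "\<And>n. (\<integral>\<^sup>+\<omega>. ennreal (Z n \<omega> ^ 2) \<partial>M) \<le> ennreal BZ"
      using BZ0 unfolding BZ_def by (meson ennreal_leI max.cobounded1 order_trans)
    have D2: "\<And>n. (\<integral>\<^sup>+\<omega>. ennreal (D n \<omega> ^ 2) \<partial>M) \<le> ennreal (1 + Cp)"
      using scal.mom_i[OF sc] by simp
    define b where "b = real k * (\<rho> * KB)"
    have b0: "0 \<le> b" unfolding b_def using \<rho> KB0 by simp
    have pt: "norm (closed_loop A B k f w x t \<omega>) \<le> Z (t div k) \<omega> + b + D (t div k) \<omega>" for t \<omega>
    proof -
      define n where "n = t div k"
      define s where "s = t mod k"
      have sk: "s < k" unfolding s_def using kpos by simp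
      have t: "t = n*k + s" unfolding n_def s_def by simp
      let ?X = "closed_loop A B k f w x (n*k) \<omega>"
      have "norm (closed_loop A B k f w x t \<omega>) \<le> norm (matpow A s *v ?X)
          + norm (\<Sum>i<s. matpow A (s - 1 - i) *v (B *v f i ?X))
          + norm (\<Sum>i<s. matpow A (s - 1 - i) *v w (n*k + i) \<omega>)"
        unfolding t block_formula[OF kpos less_imp_le[OF sk]]
        by (smt (verit) norm_triangle_ineq)
      also have "\<dots> \<le> Z n \<omega> + (\<Sum>i<s. norm (B *v f i ?X)) + (\<Sum>i<s. norm (w (n*k + i) \<omega>))"
        unfolding Z_def using norm_sum[of "\<lambda>i. matpow A (s - 1 - i) *v (B *v f i ?X)" "{..<s}"]
          norm_sum[of "\<lambda>i. matpow A (s - 1 - i) *v w (n*k + i) \<omega>" "{..<s}"]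
        by (simp add: orth_norm[OF matpow_orth[OF orth]])
      also have "(\<Sum>i<s. norm (B *v f i ?X)) \<le> b"
      proof -
        have "(\<Sum>i<s. norm (B *v f i ?X)) \<le> (\<Sum>i<s. \<rho> * KB)"
        proof (intro sum_mono)
          fix i assume "i \<in> {..<s}"
          hence "i < k" using sk by simp
          have "norm (B *v f i ?X) \<le> norm (f i ?X) * KB" by (rule KB)
          also have "\<dots> \<le> \<rho> * KB" using fb[OF \<open>i < k\<close>] KB0 by (rule mult_right_mono)
          finally show "norm (B *v f i ?X) \<le> \<rho> * KB" .
        qed
        also have "\<dots> = real s * (\<rho> * KB)" by simp
        also have "\<dots> \<le> b" unfolding b_def using sk \<rho> KB0 by (intro mult_right_mono) auto
        finally show ?thesis .
      qed
      also have "(\<Sum>i<s. norm (w (n*k + i) \<omega>)) \<le> D n \<omega>"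
        unfolding D_def using sk by (intro sum_mono2) auto
      finally show ?thesis unfolding n_def by simp
    qed
    have tb: "(\<integral>\<^sup>+\<omega>. ennreal (norm (closed_loop A B k f w x t \<omega>) ^ 2) \<partial>M) \<le> ennreal (3 * BZ + 3 * b^2 + 3 * (1 + Cp))" for t
    proof -
      let ?n = "t div k"
      have "(\<integral>\<^sup>+\<omega>. ennreal (norm (closed_loop A B k f w x t \<omega>) ^ 2) \<partial>M)
          \<le> (\<integral>\<^sup>+\<omega>. ennreal 3 * ennreal (Z ?n \<omega> ^ 2) + ennreal (3 * b^2) + ennreal 3 * ennreal (D ?n \<omega> ^ 2) \<partial>M)"
      proof (intro nn_integral_mono)
        fix \<omega>
        have z0: "0 \<le> Z ?n \<omega>" "0 \<le> D ?n \<omega>" unfolding Z_def D_def by (auto intro: sum_nonneg)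
        have "norm (closed_loop A B k f w x t \<omega>) ^ 2 \<le> (Z ?n \<omega> + b + D ?n \<omega>)^2"
          using pt[of t \<omega>] by (intro power_mono) auto
        also have "\<dots> \<le> 3 * (Z ?n \<omega>^2 + b^2 + D ?n \<omega>^2)" by (rule sq3)
        finally have "ennreal (norm (closed_loop A B k f w x t \<omega>) ^ 2) \<le> ennreal (3 * Z ?n \<omega>^2 + 3 * b^2 + 3 * D ?n \<omega>^2)"
          by (intro ennreal_leI) (simp add: algebra_simps)
        also have "\<dots> = ennreal 3 * ennreal (Z ?n \<omega> ^ 2) + ennreal (3 * b^2) + ennreal 3 * ennreal (D ?n \<omega> ^ 2)"
        proof -
          have a: "0 \<le> 3 * Z ?n \<omega>^2" "0 \<le> 3 * b^2" "0 \<le> 3 * D ?n \<omega>^2" by auto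
          have "ennreal (3 * Z ?n \<omega>^2 + 3 * b^2 + 3 * D ?n \<omega>^2) = ennreal (3 * Z ?n \<omega>^2 + 3 * b^2) + ennreal (3 * D ?n \<omega>^2)"
            using a by (intro ennreal_plus) auto
          also have "ennreal (3 * Z ?n \<omega>^2 + 3 * b^2) = ennreal (3 * Z ?n \<omega>^2) + ennreal (3 * b^2)"
            using a by (intro ennreal_plus) auto
          also have "ennreal (3 * Z ?n \<omega>^2) = ennreal 3 * ennreal (Z ?n \<omega>^2)" by (intro ennreal_mult) auto
          also have "ennreal (3 * D ?n \<omega>^2) = ennreal 3 * ennreal (D ?n \<omega>^2)" by (intro ennreal_mult) auto
          finally show ?thesis .
        qed
        finally show "ennreal (norm (closed_loop A B k f w x t \<omega>) ^ 2) \<le> ennreal 3 * ennreal (Z ?n \<omega> ^ 2) + ennreal (3 * b^2) + ennreal 3 * ennreal (D ?n \<omega> ^ 2)" .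
      qed
      also have "\<dots> = ennreal 3 * (\<integral>\<^sup>+\<omega>. ennreal (Z ?n \<omega> ^ 2) \<partial>M) + ennreal (3 * b^2) + ennreal 3 * (\<integral>\<^sup>+\<omega>. ennreal (D ?n \<omega> ^ 2) \<partial>M)"
        using scal.Zm[OF sc] scal.Dm[OF sc]
        by (simp add: nn_integral_add nn_integral_cmult P.emeasure_space_1)
      also have "\<dots> \<le> ennreal 3 * ennreal BZ + ennreal (3 * b^2) + ennreal 3 * ennreal (1 + Cp)"
        by (intro add_mono mult_left_mono BZ D2) auto
      also have "\<dots> = ennreal (3 * BZ + 3 * b^2 + 3 * (1 + Cp))"
      proof -
        have a: "0 \<le> 3 * BZ" "0 \<le> 3 * b^2" "0 \<le> 3 * (1 + Cp)" using BZ0' Cp0 by auto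
        have "ennreal (3 * BZ + 3 * b^2 + 3 * (1 + Cp)) = ennreal (3 * BZ + 3 * b^2) + ennreal (3 * (1 + Cp))"
          using a by (intro ennreal_plus) auto
        also have "ennreal (3 * BZ + 3 * b^2) = ennreal (3 * BZ) + ennreal (3 * b^2)"
          using a by (intro ennreal_plus) auto
        also have "ennreal (3 * BZ) = ennreal 3 * ennreal BZ" using BZ0' by (intro ennreal_mult) auto
        also have "ennreal (3 * (1 + Cp)) = ennreal 3 * ennreal (1 + Cp)" using Cp0 by (intro ennreal_mult) auto
        finally show ?thesis by simp
      qed
      finally show ?thesis .
    qed
    have "(SUP t. \<integral>\<^sup>+\<omega>. ennreal (norm (closed_loop A B k f w x t \<omega>) ^ 2) \<partial>M) \<le> ennreal (3 * BZ + 3 * b^2 + 3 * (1 + Cp))"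
      by (rule SUP_least) (rule tb)
    thus ?thesis by (simp add: top.not_eq_extremum order_le_less_trans)
  qed
  show ?thesis
    using \<rho> fm fb fin by blast
qed


end
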